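(* Let $C$ be a $k$-dimensional resolution configuration and let $F_C:V_0(C)\to V_1(C)$ be an associated map of bidegree $(k,2k)$ satisfying the naturality rule, the disoriented rule, the duality rule, the extension rule and the filtration rule. If $F_C$ is non-zero, then $F_C$ agrees with the Sarkar–Seed–Szabo formula; in particular the active part of $C$ is a disjoint union of trees and dual trees.
   Context: A $k$-dimensional resolution configuration $C$ is a finite set of pairwise disjoint embedded circles in $S^2$ (the starting circles) together with $k$ pairwise disjoint embedded arcs whose endpoints lie on the circles and whose interiors are disjoint from the circles; it is oriented if the arcs are oriented. The ending circles are obtained by surgery along all arcs. The dual configuration $C^*$ consists of the ending circles with dual arcs obtained by rotating each arc $90$ degrees counterclockwise; the mirror $m(C)$ is the reflection of $C$ in $\mathbb{R}\times\{0\}\subset\mathbb{R}^2\cup\{\infty\}=S^2$. A starting circle meeting no arc is passive (it is also an ending circle); removing all passive circles gives the active part $C_0$, and $V_i(C)=V_i(C_0)\otimes P(C)$ where $P(C)$ is the tensor product of $\mathbb{F}_2[w]/(w^2)$ over passive circles $w$. $C$ is connected if the graph with vertices the circles and edges the arcs is connected; any configuration is a disjoint union of connected components. A connected $n$-dimensional configuration is a tree if it has exactly $n+1$ starting circles and one ending circle; a dual tree is the dual of a tree. $V_0(C)=\bigotimes_i\mathbb{F}_2[x_i]/(x_i^2)$ over starting circles, $V_1(C)=\bigotimes_j\mathbb{F}_2[y_j]/(y_j^2)$ over ending circles, with bases of monomials. Quantum grading: in each factor $\mathrm{gr}_q(1)=1$, $\mathrm{gr}_q(z)=-1$, summed over factors,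 and for a $k$-dimensional configuration monomials of $V_1(C)$ get an extra shift of $+k$. A linear map $F_C$ has bidegree $(k,p)$ if it sends each monomial to a combination of monomials with quantum grading larger by $p$. Sarkar–Seed–Szabo formula: for a tree with starting circles $x_1,\dots,x_{n+1}$ and ending circle $y$, $F_C(x_1\cdots x_{n+1})=y$ and $F_C$ is zero on all other monomials; for a dual tree with ending circles $y_1,\dots,y_{n+1}$, $F_C(1)=1\otimes\cdots\otimes1$ and $F_C$ is zero on the other monomial; if the active part of $C$ is a disjoint union of trees and dual trees $C_1,\dots,C_m$, then $F_C=(\bigotimes_i F_{C_i})\otimes\mathrm{id}_{P(C)}$; otherwise $F_C=0$. Rules: (Naturality) if an orientation-preserving diffeomorphism of $S^2$ sends $C$ to $C'$, then $F_C=F_{C'}$ under the induced identifications. (Disoriented) if $C,C'$ differ only in orientations of arcs then $F_C=F_{C'}$. (Duality) with canonical identifications $V_0(m(C^* ))=V_1(C)$, $V_1(m(C^* ))=V_0(C)$, and $a\mapsto a^*$ the map on monomials induced by $1^*=z$, $z^*=1$ in each factor, the coefficient of $b$ in $F_C(a)$ equals the coefficient of $a^*$ in $F_{m(C^* )}(b^* )$ for all monomials $a\in V_0(C)$, $b\in V_1(C)$. (Extension) $F_C(a\cdot v)=F_{C_0}(a)\cdot v$ for $a\in V_0(C_0)$, $v\in P(C)$. (Filtration) for a point $P$ on the starting circles, with $x(P)$, $y(P)$ the starting and ending circles containing $P$: if monomial $a$ is divisible by $x(P)$ and the coefficient of monomial $b$ in $F_C(a)$ is non-zero, then $y(P)$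 divides $b$. *)

theory Defs
  imports Main
begin

text \<open>
Combinatorial model of (oriented) resolution configurations in S^2, up to
orientation-preserving diffeomorphism.

Each arc e has a small square neighbourhood whose boundary meets the starting
circles in four corners (e,0),(e,1),(e,2),(e,3), listed counterclockwise.
Inside the square, the starting circles run along the strands {0,1} and {2,3};
the arc is oriented from strand {0,1} to strand {2,3}.  After surgery the
ending circles run along the strands {1,2} and {3,0}.  Outside the squares the
circles consist of segments joining corners in pairs: this is the fixed point
free involution outer.  This gives a 4-valent map (vertices = arcs, rotation
(e,j) to (e,j+1)), planar on each connected component.  Passive circles are
labels in pas.  The placement of the connected components in S^2 is recorded by
labelling every complementary region: reg c is the region of the face traced
by the corner c (faces are orbits of rot4 o outer), pside w b is the region on
side b of the passive circle w; components and regions must form a tree.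
\<close>

type_synonym corner = "nat \<times> nat"

record cfg =
  arcs  :: "nat set"
  outer :: "corner \<Rightarrow> corner"
  pas   :: "nat set"
  reg   :: "corner \<Rightarrow> nat"
  pside :: "nat \<Rightarrow> bool \<Rightarrow> nat"

definition corners :: "cfg \<Rightarrow> corner set" where
  "corners C = arcs C \<times> {0..<4}"

definition rot4 :: "corner \<Rightarrow> corner" where
  "rot4 c = (fst c, (snd c + 1) mod 4)"

text \<open>pairing of corners by starting strands {0,1},{2,3} and ending strands {1,2},{3,0}\<close>
definition spair :: "nat \<Rightarrow> nat" where
  "spair j = (if even j then j + 1 else j - 1)"

definition epair :: "nat \<Rightarrow> nat" where
  "epair j = 3 - j"

definition sstep :: "cfg \<Rightarrow> corner \<Rightarrow> corner \<Rightarrow> bool" where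
  "sstep C c d \<longleftrightarrow> c \<in> corners C \<and> d \<in> corners C \<and>
     (d = outer C c \<or> (fst d = fst c \<and> snd d = spair (snd c)))"

definition estep :: "cfg \<Rightarrow> corner \<Rightarrow> corner \<Rightarrow> bool" where
  "estep C c d \<longleftrightarrow> c \<in> corners C \<and> d \<in> corners C \<and>
     (d = outer C c \<or> (fst d = fst c \<and> snd d = epair (snd c)))"

definition cstep :: "cfg \<Rightarrow> corner \<Rightarrow> corner \<Rightarrow> bool" where
  "cstep C c d \<longleftrightarrow> c \<in> corners C \<and> d \<in> corners C \<and>
     (d = outer C c \<or> fst d = fst c)"

text \<open>corners on the starting / ending circle through c; connected component of c\<close>
definition sclass :: "cfg \<Rightarrow> corner \<Rightarrow> corner set" where
  "sclass C c = {d. (sstep C)\<^sup>*\<^sup>* c d}"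

definition eclass :: "cfg \<Rightarrow> corner \<Rightarrow> corner set" where
  "eclass C c = {d. (estep C)\<^sup>*\<^sup>* c d}"

definition compclass :: "cfg \<Rightarrow> corner \<Rightarrow> corner set" where
  "compclass C c = {d. (cstep C)\<^sup>*\<^sup>* c d}"

definition face :: "cfg \<Rightarrow> corner \<Rightarrow> corner set" where
  "face C c = {d. \<exists>n. ((rot4 \<circ> outer C) ^^ n) c = d}"

datatype circ = Circ "corner set" | PasC nat

definition SC :: "cfg \<Rightarrow> circ set" where
  "SC C = (\<lambda>c. Circ (sclass C c)) ` corners C \<union> PasC ` pas C"

definition EC :: "cfg \<Rightarrow> circ set" where
  "EC C = (\<lambda>c. Circ (eclass C c)) ` corners C \<union> PasC ` pas C"

definition ACs :: "cfg \<Rightarrow> corner set set" where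
  "ACs C = compclass C ` corners C"

datatype node = NComp "corner set" | NPas nat | NReg nat

definition regions :: "cfg \<Rightarrow> nat set" where
  "regions C = reg C ` corners C \<union> {pside C w b | w b. w \<in> pas C}"

definition nodes :: "cfg \<Rightarrow> node set" where
  "nodes C = NComp ` ACs C \<union> NPas ` pas C \<union> NReg ` regions C"

definition adj :: "cfg \<Rightarrow> node \<Rightarrow> node \<Rightarrow> bool" where
  "adj C x y \<longleftrightarrow>
     (\<exists>c\<in>corners C. x = NComp (compclass C c) \<and> y = NReg (reg C c)) \<or>
     (\<exists>w\<in>pas C. \<exists>b. x = NPas w \<and> y = NReg (pside C w b))"

definition wf_cfg :: "cfg \<Rightarrow> bool" where
  "wf_cfg C \<longleftrightarrow> finite (arcs C) \<and> finite (pas C) \<and>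
     (\<forall>c\<in>corners C. outer C c \<in> corners C \<and> outer C c \<noteq> c \<and> outer C (outer C c) = c) \<and>
     (\<forall>c\<in>corners C. reg C (rot4 (outer C c)) = reg C c) \<and>
     (\<forall>K\<in>ACs C. card (face C ` K) = card (fst ` K) + 2) \<and>
     (nodes C \<noteq> {} \<longrightarrow>
        (\<forall>x\<in>nodes C. \<forall>y\<in>nodes C. (\<lambda>u v. adj C u v \<or> adj C v u)\<^sup>*\<^sup>* x y) \<and>
        card (face C ` corners C) + 2 * card (pas C) + 1 = card (nodes C))"

text \<open>orientation-preserving diffeomorphisms (isomorphisms of the data)\<close>
definition cfg_iso :: "cfg \<Rightarrow> cfg \<Rightarrow> (nat \<Rightarrow> nat) \<Rightarrow> (nat \<Rightarrow> nat) \<Rightarrow> (nat \<Rightarrow> nat)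
    \<Rightarrow> (nat \<Rightarrow> bool) \<Rightarrow> bool" where
  "cfg_iso C C' \<pi> \<rho> \<tau> s \<longleftrightarrow>
     bij_betw \<pi> (arcs C) (arcs C') \<and> bij_betw \<rho> (pas C) (pas C') \<and> inj_on \<tau> (regions C) \<and>
     (\<forall>e j. (e, j) \<in> corners C \<longrightarrow>
        outer C' (\<pi> e, j) = apfst \<pi> (outer C (e, j)) \<and> reg C' (\<pi> e, j) = \<tau> (reg C (e, j))) \<and>
     (\<forall>w\<in>pas C. \<forall>b. pside C' (\<rho> w) (b \<noteq> s w) = \<tau> (pside C w b))"

fun circ_map :: "(corner \<Rightarrow> corner) \<Rightarrow> (nat \<Rightarrow> nat) \<Rightarrow> circ \<Rightarrow> circ" where
  "circ_map \<phi> \<rho> (Circ S) = Circ (\<phi> ` S)"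
| "circ_map \<phi> \<rho> (PasC w) = PasC (\<rho> w)"

definition maph :: "(nat \<Rightarrow> nat \<Rightarrow> nat) \<Rightarrow> corner \<Rightarrow> corner" where
  "maph h c = (fst c, h (fst c) (snd c))"

text \<open>relabel the corners of every square by h (inverse hinv); orev: orientation reversing\<close>
definition relab :: "(nat \<Rightarrow> nat \<Rightarrow> nat) \<Rightarrow> (nat \<Rightarrow> nat \<Rightarrow> nat) \<Rightarrow> bool \<Rightarrow> cfg \<Rightarrow> cfg" where
  "relab h hinv orev C = C\<lparr> outer := (\<lambda>c. maph h (outer C (maph hinv c))),
      reg := (\<lambda>c. if orev then reg C (outer C (maph hinv c)) else reg C (maph hinv c)) \<rparr>"

definition rev_h :: "nat set \<Rightarrow> nat \<Rightarrow> nat \<Rightarrow> nat" where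
  "rev_h Os e j = (if e \<in> Os then (j + 2) mod 4 else j)"

text \<open>reverse the orientation of the arcs in Os\<close>
definition reorient :: "nat set \<Rightarrow> cfg \<Rightarrow> cfg" where
  "reorient Os C = relab (rev_h Os) (rev_h Os) False C"

definition md_h :: "nat \<Rightarrow> nat \<Rightarrow> nat" where
  "md_h e j = (6 - j) mod 4"

text \<open>m(C^*): dual (arcs rotated 90 degrees counterclockwise) followed by the mirror\<close>
definition mdual :: "cfg \<Rightarrow> cfg" where
  "mdual C = relab md_h md_h True C"

text \<open>the configuration T with T^* = C (arcs rotated 90 degrees clockwise)\<close>
definition undual :: "cfg \<Rightarrow> cfg" where
  "undual C = relab (\<lambda>e j. (j + 1) mod 4) (\<lambda>e j. (j + 3) mod 4) False C"

text \<open>active part C_0: passive circles removed, adjacent regions merged\<close>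
definition rmerge :: "cfg \<Rightarrow> nat \<Rightarrow> nat \<Rightarrow> bool" where
  "rmerge C x y \<longleftrightarrow> (\<exists>w\<in>pas C. (x = pside C w False \<and> y = pside C w True) \<or>
                                (x = pside C w True \<and> y = pside C w False))"

definition active :: "cfg \<Rightarrow> cfg" where
  "active C = C\<lparr> pas := {}, reg := (\<lambda>c. LEAST r. (rmerge C)\<^sup>*\<^sup>* (reg C c) r) \<rparr>"

definition SCK :: "cfg \<Rightarrow> corner set \<Rightarrow> circ set" where
  "SCK C K = (\<lambda>c. Circ (sclass C c)) ` K"

definition ECK :: "cfg \<Rightarrow> corner set \<Rightarrow> circ set" where
  "ECK C K = (\<lambda>c. Circ (eclass C c)) ` K"

definition tree_comp :: "cfg \<Rightarrow> corner set \<Rightarrow> bool" where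
  "tree_comp C K \<longleftrightarrow> card (SCK C K) = card (fst ` K) + 1 \<and> card (ECK C K) = 1"

definition dtree_comp :: "cfg \<Rightarrow> corner set \<Rightarrow> bool" where
  "dtree_comp C K \<longleftrightarrow> tree_comp (undual C) (maph (\<lambda>e j. (j + 1) mod 4) ` K)"

text \<open>maps are given by coefficients: F C a b = coefficient of monomial b in F_C(a),
  monomials being the sets of circles carrying the variable x_i / y_j\<close>
type_synonym cmap = "circ set \<Rightarrow> circ set \<Rightarrow> bool"

definition sss :: "cfg \<Rightarrow> cmap" where
  "sss C a b \<longleftrightarrow>
     (\<forall>K\<in>ACs C. tree_comp C K \<or> dtree_comp C K) \<and>
     (\<forall>K\<in>ACs C. tree_comp C K \<longrightarrow> SCK C K \<subseteq> a \<and> ECK C K \<subseteq> b) \<and>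
     (\<forall>K\<in>ACs C. dtree_comp C K \<longrightarrow> SCK C K \<inter> a = {} \<and> ECK C K \<inter> b = {}) \<and>
     (\<forall>w\<in>pas C. PasC w \<in> a \<longleftrightarrow> PasC w \<in> b)"

definition bidegree_rule :: "(cfg \<Rightarrow> cmap) \<Rightarrow> bool" where
  "bidegree_rule F \<longleftrightarrow> (\<forall>C a b. wf_cfg C \<longrightarrow> a \<subseteq> SC C \<longrightarrow> b \<subseteq> EC C \<longrightarrow> F C a b \<longrightarrow>
     int (card (EC C)) - 2 * int (card b) + int (card (arcs C))
       = int (card (SC C)) - 2 * int (card a) + 2 * int (card (arcs C)))"

definition naturality_rule :: "(cfg \<Rightarrow> cmap) \<Rightarrow> bool" where
  "naturality_rule F \<longleftrightarrow> (\<forall>C C' \<pi> \<rho> \<tau> s. wf_cfg C \<longrightarrow> wf_cfg C' \<longrightarrow> cfg_iso C C' \<pi> \<rho> \<tau> s \<longrightarrow>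
     (\<forall>a b. a \<subseteq> SC C \<longrightarrow> b \<subseteq> EC C \<longrightarrow>
        F C a b = F C' (circ_map (apfst \<pi>) \<rho> ` a) (circ_map (apfst \<pi>) \<rho> ` b)))"

definition disoriented_rule :: "(cfg \<Rightarrow> cmap) \<Rightarrow> bool" where
  "disoriented_rule F \<longleftrightarrow> (\<forall>C Os. wf_cfg C \<longrightarrow> Os \<subseteq> arcs C \<longrightarrow>
     (\<forall>a b. a \<subseteq> SC C \<longrightarrow> b \<subseteq> EC C \<longrightarrow>
        F C a b = F (reorient Os C) (circ_map (maph (rev_h Os)) id ` a)
                                   (circ_map (maph (rev_h Os)) id ` b)))"

definition duality_rule :: "(cfg \<Rightarrow> cmap) \<Rightarrow> bool" where
  "duality_rule F \<longleftrightarrow> (\<forall>C. wf_cfg C \<longrightarrow>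
     (\<forall>a b. a \<subseteq> SC C \<longrightarrow> b \<subseteq> EC C \<longrightarrow>
        F C a b = F (mdual C) (circ_map (maph md_h) id ` (EC C - b))
                              (circ_map (maph md_h) id ` (SC C - a))))"

definition extension_rule :: "(cfg \<Rightarrow> cmap) \<Rightarrow> bool" where
  "extension_rule F \<longleftrightarrow> (\<forall>C. wf_cfg C \<longrightarrow>
     (\<forall>a v b. a \<subseteq> SC (active C) \<longrightarrow> v \<subseteq> pas C \<longrightarrow> b \<subseteq> EC C \<longrightarrow>
        F C (a \<union> PasC ` v) b =
          (b \<inter> PasC ` pas C = PasC ` v \<and> F (active C) a (b - PasC ` pas C))))"

definition filtration_rule :: "(cfg \<Rightarrow> cmap) \<Rightarrow> bool" where
  "filtration_rule F \<longleftrightarrow> (\<forall>C a b. wf_cfg C \<longrightarrow> a \<subseteq> SC C \<longrightarrow> b \<subseteq> EC C \<longrightarrow> F C a b \<longrightarrow>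
     (\<forall>c\<in>corners C. Circ (sclass C c) \<in> a \<longrightarrow> Circ (eclass C c) \<in> b) \<and>
     (\<forall>w\<in>pas C. PasC w \<in> a \<longrightarrow> PasC w \<in> b))"

end

theory Submission
  imports Defs
begin


lemma rtp_sym:
  assumes "\<And>c d. R c d \<Longrightarrow> R d c" and "R\<^sup>*\<^sup>* c d"
  shows "R\<^sup>*\<^sup>* d c"
  using assms(2)
proof induction
  case base then show ?case by simp
next
  case (step y z)
  then show ?case using assms(1) by (meson converse_rtranclp_into_rtranclp)
qed

lemma rtp_cls_eq:
  assumes "\<And>c d. R c d \<Longrightarrow> R d c" and "R\<^sup>*\<^sup>* c d"
  shows "{x. R\<^sup>*\<^sup>* c x} = {x. R\<^sup>*\<^sup>* d x}"
proof -
  have "R\<^sup>*\<^sup>* d c" using rtp_sym[OF assms] .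
  then show ?thesis using assms(2) by (auto intro: rtranclp_trans)
qed

lemma even_card_invol:
  assumes "finite S" "\<And>v. v\<in>S \<Longrightarrow> f v \<in> S" "\<And>v. v\<in>S \<Longrightarrow> f v \<noteq> v" "\<And>v. v\<in>S \<Longrightarrow> f (f v) = v"
  shows "even (card S)"
  using assms
proof (induction "card S" arbitrary: S rule: less_induct)
  case less
  show ?case
  proof (cases "S = {}")
    case True then show ?thesis by simp
  next
    case False
    then obtain v where v: "v \<in> S" by auto
    let ?S' = "S - {v, f v}"
    have fv: "f v \<in> S" "f v \<noteq> v" using less.prems(2,3) v by blast+
    have sub: "{v, f v} \<subseteq> S" using v fv by blast
    have c2: "card {v, f v} = 2" using fv(2) by simp
    have c: "card S = card ?S' + 2"
      using card_Diff_subset[OF _ sub] card_mono[OF less.prems(1) sub] c2 by simp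
    have "even (card ?S')"
    proof (rule less.hyps)
      show "card ?S' < card S" using c by simp
      show "finite ?S'" using less.prems(1) by simp
      fix w assume w: "w \<in> S - {v, f v}"
      have a: "f w \<in> S" "f w \<noteq> w" "f (f w) = w" using w less.prems(2,3,4) by blast+
      have "f w \<noteq> v" proof assume "f w = v" then have "f v = w" using a(3) by simp then show False using w by blast qed
      moreover have "f w \<noteq> f v"
      proof
        assume "f w = f v"
        then have "f (f w) = f (f v)" by simp
        then have "w = v" using a(3) less.prems(4)[OF v] by simp
        then show False using w by blast
      qed
      ultimately show "f w \<in> S - {v, f v}" using a by blast
      show "f w \<noteq> w" by fact
      show "f (f w) = w" by fact
    qed
    then show ?thesis using c by simp
  qed
qed

lemma cls_avoid:
  assumes agree: "\<And>c d. c \<notin> Q \<Longrightarrow> R c d = R' c d"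
    and avoid: "{x. R\<^sup>*\<^sup>* c x} \<inter> Q = {}"
  shows "{x. R'\<^sup>*\<^sup>* c x} = {x. R\<^sup>*\<^sup>* c x}"
proof
  show "{x. R'\<^sup>*\<^sup>* c x} \<subseteq> {x. R\<^sup>*\<^sup>* c x}"
  proof
    fix d assume "d \<in> {x. R'\<^sup>*\<^sup>* c x}"
    then have "R'\<^sup>*\<^sup>* c d" by simp
    then show "d \<in> {x. R\<^sup>*\<^sup>* c x}"
    proof induction
      case base then show ?case by simp
    next
      case (step y z)
      then have "y \<notin> Q" using avoid by auto
      then have "R y z" using agree step by simp
      then show ?case using step by (simp add: rtranclp.rtrancl_into_rtrancl)
    qed
  qed
next
  show "{x. R\<^sup>*\<^sup>* c x} \<subseteq> {x. R'\<^sup>*\<^sup>* c x}"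
  proof
    fix d assume "d \<in> {x. R\<^sup>*\<^sup>* c x}"
    then have "R\<^sup>*\<^sup>* c d" by simp
    then show "d \<in> {x. R'\<^sup>*\<^sup>* c x}"
    proof induction
      case base then show ?case by simp
    next
      case (step y z)
      then have "y \<notin> Q" using avoid by auto
      then have "R' y z" using agree step by simp
      then show ?case using step by (simp add: rtranclp.rtrancl_into_rtrancl)
    qed
  qed
qed

lemma cls_count_split:
  assumes symR: "\<And>c d. R c d \<Longrightarrow> R d c"
    and fin: "finite X" and QX: "Q \<subseteq> X"
  shows "card ((\<lambda>c. {x. R\<^sup>*\<^sup>* c x}) ` X)
     = card {S \<in> (\<lambda>c. {x. R\<^sup>*\<^sup>* c x}) ` X. S \<inter> Q = {}} + card ((\<lambda>c. {x. R\<^sup>*\<^sup>* c x}) ` Q)"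
proof -
  let ?cl = "\<lambda>c. {x. R\<^sup>*\<^sup>* c x}"
  have eq: "?cl ` X = {S \<in> ?cl ` X. S \<inter> Q = {}} \<union> ?cl ` Q"
  proof (intro equalityI subsetI)
    fix S assume "S \<in> ?cl ` X"
    then obtain c where c: "c \<in> X" "S = ?cl c" by auto
    show "S \<in> {S \<in> ?cl ` X. S \<inter> Q = {}} \<union> ?cl ` Q"
    proof (cases "S \<inter> Q = {}")
      case True then show ?thesis using c by auto
    next
      case False
      then obtain q where q: "q \<in> Q" "R\<^sup>*\<^sup>* c q" using c by auto
      have "?cl c = ?cl q" using rtp_cls_eq[OF symR q(2)] .
      then show ?thesis using q c by auto
    qed
  next
    fix S assume "S \<in> {S \<in> ?cl ` X. S \<inter> Q = {}} \<union> ?cl ` Q"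
    then show "S \<in> ?cl ` X" using QX by auto
  qed
  have disj: "{S \<in> ?cl ` X. S \<inter> Q = {}} \<inter> ?cl ` Q = {}" by auto
  show ?thesis
    apply (subst eq)
    apply (rule card_Un_disjoint)
    using fin QX disj by (auto intro: finite_subset)
qed

lemma cls_count_compare:
  assumes symR: "\<And>c d. R c d \<Longrightarrow> R d c" and symR': "\<And>c d. R' c d \<Longrightarrow> R' d c"
    and agree: "\<And>c d. c \<notin> Q \<Longrightarrow> R c d = R' c d"
    and fin: "finite X" and QX: "Q \<subseteq> X"
  shows "card ((\<lambda>c. {x. R\<^sup>*\<^sup>* c x}) ` X) + card ((\<lambda>c. {x. R'\<^sup>*\<^sup>* c x}) ` Q)
       = card ((\<lambda>c. {x. R'\<^sup>*\<^sup>* c x}) ` X) + card ((\<lambda>c. {x. R\<^sup>*\<^sup>* c x}) ` Q)"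
proof -
  let ?cl = "\<lambda>c. {x. R\<^sup>*\<^sup>* c x}"
  let ?cl' = "\<lambda>c. {x. R'\<^sup>*\<^sup>* c x}"
  have Y: "{S \<in> ?cl ` X. S \<inter> Q = {}} = {S \<in> ?cl' ` X. S \<inter> Q = {}}"
  proof (intro equalityI subsetI)
    fix S assume "S \<in> {S \<in> ?cl ` X. S \<inter> Q = {}}"
    then obtain c where c: "c \<in> X" "S = ?cl c" "?cl c \<inter> Q = {}" by auto
    have "?cl' c = ?cl c" by (rule cls_avoid[OF agree c(3)])
    then show "S \<in> {S \<in> ?cl' ` X. S \<inter> Q = {}}" using c by auto
  next
    fix S assume "S \<in> {S \<in> ?cl' ` X. S \<inter> Q = {}}"
    then obtain c where c: "c \<in> X" "S = ?cl' c" "?cl' c \<inter> Q = {}" by auto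
    have "?cl c = ?cl' c" by (rule cls_avoid[OF _ c(3)]) (use agree in auto)
    then show "S \<in> {S \<in> ?cl ` X. S \<inter> Q = {}}" using c by auto
  qed
  show ?thesis
    using cls_count_split[OF symR fin QX] cls_count_split[OF symR' fin QX] Y by simp
qed



definition tauT :: "nat set \<Rightarrow> corner \<Rightarrow> corner" where
  "tauT T c = (fst c, if fst c \<in> T then epair (snd c) else spair (snd c))"

definition rstep :: "cfg \<Rightarrow> corner set \<Rightarrow> nat set \<Rightarrow> corner \<Rightarrow> corner \<Rightarrow> bool" where
  "rstep C K T c d \<longleftrightarrow> c \<in> K \<and> d \<in> K \<and> (d = outer C c \<or> d = tauT T c)"

definition gstep :: "cfg \<Rightarrow> corner set \<Rightarrow> nat set \<Rightarrow> corner \<Rightarrow> corner \<Rightarrow> bool" where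
  "gstep C K T c d \<longleftrightarrow> c \<in> K \<and> d \<in> K \<and>
     (d = outer C c \<or> d = tauT {} c \<or> (fst d = fst c \<and> fst c \<in> T))"

definition NN :: "cfg \<Rightarrow> corner set \<Rightarrow> nat set \<Rightarrow> nat" where
  "NN C K T = card ((\<lambda>c. {x. (rstep C K T)\<^sup>*\<^sup>* c x}) ` K)"

definition GG :: "cfg \<Rightarrow> corner set \<Rightarrow> nat set \<Rightarrow> nat" where
  "GG C K T = card ((\<lambda>c. {x. (gstep C K T)\<^sup>*\<^sup>* c x}) ` K)"

definition goodK :: "cfg \<Rightarrow> corner set \<Rightarrow> bool" where
  "goodK C K \<longleftrightarrow> finite (fst ` K) \<and> K = fst ` K \<times> {0..<4} \<and>
     (\<forall>c\<in>K. outer C c \<in> K \<and> outer C c \<noteq> c \<and> outer C (outer C c) = c)"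

lemma spair_props: "j < 4 \<Longrightarrow> spair j < 4 \<and> spair j \<noteq> j \<and> spair (spair j) = j"
proof -
  assume "j < 4" then have "j = 0 \<or> j = 1 \<or> j = 2 \<or> j = 3" by auto
  then show ?thesis unfolding spair_def by auto
qed

lemma epair_props: "j < 4 \<Longrightarrow> epair j < 4 \<and> epair j \<noteq> j \<and> epair (epair j) = j"
proof -
  assume "j < 4" then have "j = 0 \<or> j = 1 \<or> j = 2 \<or> j = 3" by auto
  then show ?thesis unfolding epair_def by auto
qed

lemma goodK_mem: "goodK C K \<Longrightarrow> c \<in> K \<longleftrightarrow> fst c \<in> fst ` K \<and> snd c < 4"
proof -
  assume "goodK C K"
  then have "K = fst ` K \<times> {0..<4}" unfolding goodK_def by blast
  then have "c \<in> K \<longleftrightarrow> c \<in> fst ` K \<times> {0..<4}" by simp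
  also have "... \<longleftrightarrow> fst c \<in> fst ` K \<and> snd c < 4" by (cases c) simp
  finally show ?thesis .
qed

lemma goodK_fin: "goodK C K \<Longrightarrow> finite K"
proof -
  assume g: "goodK C K"
  then have "K = fst ` K \<times> {0..<4}" "finite (fst ` K)" unfolding goodK_def by blast+
  then show ?thesis by (metis finite_SigmaI finite_atLeastLessThan)
qed

lemma tauT_props:
  assumes g: "goodK C K" and c: "c \<in> K"
  shows "tauT T c \<in> K \<and> tauT T c \<noteq> c \<and> tauT T (tauT T c) = c"
proof -
  obtain e j where ej: "c = (e, j)" by (cases c)
  have s: "j < 4" "e \<in> fst ` K" using goodK_mem[OF g, of c] c ej by auto
  show ?thesis
  proof (cases "e \<in> T")
    case True
    have t: "tauT T c = (e, epair j)" using True ej unfolding tauT_def by simp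
    have "(e, epair j) \<in> K" using goodK_mem[OF g, of "(e, epair j)"] epair_props[OF s(1)] s(2) by simp
    then show ?thesis using t epair_props[OF s(1)] ej True unfolding tauT_def by simp
  next
    case False
    have t: "tauT T c = (e, spair j)" using False ej unfolding tauT_def by simp
    have "(e, spair j) \<in> K" using goodK_mem[OF g, of "(e, spair j)"] spair_props[OF s(1)] s(2) by simp
    then show ?thesis using t spair_props[OF s(1)] ej False unfolding tauT_def by simp
  qed
qed

lemma outer_props:
  assumes "goodK C K" "c \<in> K"
  shows "outer C c \<in> K \<and> outer C c \<noteq> c \<and> outer C (outer C c) = c"
proof -
  have "\<forall>c\<in>K. outer C c \<in> K \<and> outer C c \<noteq> c \<and> outer C (outer C c) = c"
    using assms(1) unfolding goodK_def by (rule conjunct2[OF conjunct2])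
  then show ?thesis using assms(2) by (rule bspec)
qed

lemma rstep_sym:
  assumes g: "goodK C K" and r: "rstep C K T c d" shows "rstep C K T d c"
proof -
  have cd: "c \<in> K" "d \<in> K" "d = outer C c \<or> d = tauT T c" using r unfolding rstep_def by auto
  have "c = outer C d \<or> c = tauT T d"
  proof (cases "d = outer C c")
    case True then show ?thesis using outer_props[OF g cd(1)] by simp
  next
    case False then have "d = tauT T c" using cd by simp
    then show ?thesis using tauT_props[OF g cd(1)] by simp
  qed
  then show ?thesis unfolding rstep_def using cd by simp
qed

lemma gstep_sym:
  assumes g: "goodK C K" and r: "gstep C K T c d" shows "gstep C K T d c"
proof -
  have cd: "c \<in> K" "d \<in> K" "d = outer C c \<or> d = tauT {} c \<or> (fst d = fst c \<and> fst c \<in> T)"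
    using r unfolding gstep_def by auto
  have "c = outer C d \<or> c = tauT {} d \<or> (fst c = fst d \<and> fst d \<in> T)"
  proof (cases "d = outer C c")
    case True then show ?thesis using outer_props[OF g cd(1)] by simp
  next
    case False
    show ?thesis
    proof (cases "d = tauT {} c")
      case True then show ?thesis using tauT_props[OF g cd(1)] by simp
    next
      case False2: False
      then show ?thesis using cd False by simp
    qed
  qed
  then show ?thesis unfolding gstep_def using cd by simp
qed

lemma rtp_stay:
  assumes "\<And>c d. R c d \<Longrightarrow> d \<in> K" "R\<^sup>*\<^sup>* c d" "c \<in> K"
  shows "d \<in> K"
  using assms(2,3) by induction (use assms(1) in auto)

lemma rtp_mono:
  assumes "\<And>c d. R c d \<Longrightarrow> R' c d" "R\<^sup>*\<^sup>* c d"
  shows "R'\<^sup>*\<^sup>* c d"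
  using assms(2) by induction (use assms(1) in \<open>auto intro: rtranclp.rtrancl_into_rtrancl\<close>)

lemma r_le_g: "rstep C K T c d \<Longrightarrow> gstep C K T c d"
  unfolding rstep_def gstep_def tauT_def by (auto split: if_splits)

lemma card_two_le: "card {a, b} \<le> 2"
  by (simp add: card_insert_if)

lemma card_two_ge: "card {a, b} \<ge> 1"
  by (simp add: card_insert_if)

lemma Q1: "goodK C K \<Longrightarrow> x \<in> fst ` K \<Longrightarrow> j < 4 \<Longrightarrow> (x,j) \<in> K"
  by (rule iffD2[OF goodK_mem[of C K "(x,j)"]]) simp_all

lemma Q2: "{x} \<times> {0..<4::nat} = {(x,0),(x,1),(x,2),(x,3)}" by auto

lemma Q3: "goodK C K \<Longrightarrow> x \<in> fst ` K \<Longrightarrow> {x} \<times> {0..<4} \<subseteq> K"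
  using Q1[of C K x] by auto

lemma rcls_in: "goodK C K \<Longrightarrow> c \<in> K \<Longrightarrow> (rstep C K T)\<^sup>*\<^sup>* c d \<Longrightarrow> d \<in> K"
  by (rule rtp_stay[where R="rstep C K T"]) (auto simp: rstep_def)

lemma agree_ins:
  assumes g: "goodK C K" and c: "c \<notin> {x} \<times> {0..<4}"
  shows "rstep C K T c d = rstep C K (insert x T) c d"
proof (cases "c \<in> K")
  case True
  have "snd c < 4" using goodK_mem[OF g, of c] True by blast
  then have "fst c \<noteq> x" using c by (cases c) auto
  then have "tauT T c = tauT (insert x T) c" unfolding tauT_def by simp
  then show ?thesis unfolding rstep_def by simp
next
  case False then show ?thesis unfolding rstep_def by simp
qed

lemma agree_ins_g:
  assumes g: "goodK C K" and c: "c \<notin> {x} \<times> {0..<4}"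
  shows "gstep C K T c d = gstep C K (insert x T) c d"
proof (cases "c \<in> K")
  case True
  have "snd c < 4" using goodK_mem[OF g, of c] True by blast
  then have "fst c \<noteq> x" using c by (cases c) auto
  then show ?thesis unfolding gstep_def by simp
next
  case False then show ?thesis unfolding gstep_def by simp
qed

lemma parity_merge:
  assumes g: "goodK C K" and x: "x \<in> fst ` K" and xT: "x \<notin> T"
    and sep: "\<not> (rstep C K T)\<^sup>*\<^sup>* (x,0) (x,2)"
  shows "(rstep C K (insert x T))\<^sup>*\<^sup>* (x,0) (x,1)"
proof (rule ccontr)
  let ?I = "insert x T"
  assume nc: "\<not> (rstep C K ?I)\<^sup>*\<^sup>* (x,0) (x,1)"
  define O1 where "O1 = {y. (rstep C K T)\<^sup>*\<^sup>* (x,0) y}"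
  define D where "D = O1 \<inter> {y. (rstep C K ?I)\<^sup>*\<^sup>* (x,0) y}"
  have x0K: "(x,0) \<in> K" using Q1[OF g x] by simp
  have O1K: "O1 \<subseteq> K" unfolding O1_def using rcls_in[OF g x0K] by blast
  have finD: "finite D" unfolding D_def using O1K goodK_fin[OF g] by (meson finite_Int finite_subset)
  have x2: "(x,2) \<notin> O1" using sep unfolding O1_def by simp
  have x3: "(x,3) \<notin> O1"
  proof
    assume "(x,3) \<in> O1"
    moreover have "rstep C K T (x,3) (x,2)"
      unfolding rstep_def tauT_def spair_def using Q1[OF g x] xT by simp
    ultimately show False using x2 unfolding O1_def by (simp add: rtranclp.rtrancl_into_rtrancl)
  qed
  have x1D: "(x,1) \<notin> D" using nc unfolding D_def by simp
  have x0D: "(x,0) \<in> D" unfolding D_def O1_def by simp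
  have ev1: "even (card D)"
  proof (rule even_card_invol[where f="outer C"])
    show "finite D" by fact
    fix v assume v: "v \<in> D"
    have vK: "v \<in> K" using v O1K unfolding D_def by blast
    have op: "outer C v \<in> K" "outer C v \<noteq> v" "outer C (outer C v) = v" using outer_props[OF g vK] by auto
    have "rstep C K T v (outer C v)" "rstep C K ?I v (outer C v)" unfolding rstep_def using vK op by auto
    then show "outer C v \<in> D" using v unfolding D_def O1_def by (auto intro: rtranclp.rtrancl_into_rtrancl)
    show "outer C v \<noteq> v" by fact
    show "outer C (outer C v) = v" by fact
  qed
  have ev2: "even (card (D - {(x,0)}))"
  proof (rule even_card_invol[where f="tauT T"])
    show "finite (D - {(x,0)})" using finD by simp
    fix v assume v: "v \<in> D - {(x,0)}"
    have vK: "v \<in> K" using v O1K unfolding D_def by blast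
    have tp: "tauT T v \<in> K" "tauT T v \<noteq> v" "tauT T (tauT T v) = v" using tauT_props[OF g vK] by auto
    have vs: "snd v < 4" using goodK_mem[OF g, of v] vK by blast
    have fv: "fst v \<noteq> x"
    proof
      assume f: "fst v = x"
      have "v \<in> O1" "v \<noteq> (x,0)" "v \<noteq> (x,1)" using v x1D unfolding D_def by auto
      then have "v \<noteq> (x,0)" "v \<noteq> (x,1)" "v \<noteq> (x,2)" "v \<noteq> (x,3)" using x2 x3 by auto
      then show False using f vs by (cases v) auto
    qed
    then have teq: "tauT ?I v = tauT T v" unfolding tauT_def by simp
    have "rstep C K T v (tauT T v)" "rstep C K ?I v (tauT T v)" unfolding rstep_def using vK tp teq by auto
    then have inD: "tauT T v \<in> D" using v unfolding D_def O1_def by (auto intro: rtranclp.rtrancl_into_rtrancl)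
    have "tauT T v \<noteq> (x,0)"
    proof
      assume "tauT T v = (x,0)"
      then have "v = tauT T (x,0)" using tp(3) by metis
      also have "... = (x,1)" unfolding tauT_def spair_def using xT by simp
      finally show False using v x1D by blast
    qed
    then show "tauT T v \<in> D - {(x,0)}" using inD by blast
    show "tauT T v \<noteq> v" by fact
    show "tauT T (tauT T v) = v" by fact
  qed
  have "card D = card (D - {(x,0)}) + 1" using finD x0D
    by (metis card_Suc_Diff1 Suc_eq_plus1)
  then show False using ev1 ev2 by simp
qed

lemma classes_pair:
  assumes symR: "\<And>c d. R c d \<Longrightarrow> R d c" and a: "R a b" and c: "R c d"
  shows "(\<lambda>c. {x. R\<^sup>*\<^sup>* c x}) ` {a, b, c, d} = {{x. R\<^sup>*\<^sup>* a x}, {x. R\<^sup>*\<^sup>* c x}}"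
proof -
  have "{x. R\<^sup>*\<^sup>* a x} = {x. R\<^sup>*\<^sup>* b x}" using rtp_cls_eq[of R, OF symR r_into_rtranclp[of R, OF a]] .
  moreover have "{x. R\<^sup>*\<^sup>* c x} = {x. R\<^sup>*\<^sup>* d x}" using rtp_cls_eq[of R, OF symR r_into_rtranclp[of R, OF c]] .
  ultimately show ?thesis by auto
qed

lemma N_step:
  assumes g: "goodK C K" and x: "x \<in> fst ` K" and xT: "x \<notin> T"
  shows "NN C K (insert x T) \<le> NN C K T + 1"
    and "\<not> (gstep C K T)\<^sup>*\<^sup>* (x,0) (x,2) \<Longrightarrow> NN C K (insert x T) + 1 \<le> NN C K T"
proof -
  let ?I = "insert x T"
  let ?Q = "{x} \<times> {0..<4::nat}"
  let ?cT = "\<lambda>c. {y. (rstep C K T)\<^sup>*\<^sup>* c y}"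
  let ?cI = "\<lambda>c. {y. (rstep C K ?I)\<^sup>*\<^sup>* c y}"
  have cmp: "NN C K T + card (?cI ` ?Q) = NN C K ?I + card (?cT ` ?Q)"
    unfolding NN_def
    by (rule cls_count_compare[of "rstep C K T" "rstep C K ?I", OF rstep_sym[OF g] rstep_sym[OF g] agree_ins[OF g] goodK_fin[OF g] Q3[OF g x]])
  have K: "(x,0) \<in> K" "(x,1) \<in> K" "(x,2) \<in> K" "(x,3) \<in> K" using Q1[OF g x] by auto
  have sT: "rstep C K T (x,0) (x,1)" "rstep C K T (x,2) (x,3)"
    unfolding rstep_def tauT_def spair_def using K xT by auto
  have sI: "rstep C K ?I (x,0) (x,3)" "rstep C K ?I (x,1) (x,2)"
    unfolding rstep_def tauT_def epair_def using K by auto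
  have eT: "?cT ` ?Q = {?cT (x,0), ?cT (x,2)}"
    unfolding Q2 using classes_pair[of "rstep C K T", OF rstep_sym[OF g] sT(1) sT(2)] by simp
  have Qeq: "?Q = {(x,0),(x,3),(x,1),(x,2)}" unfolding Q2 by auto
  have eI: "?cI ` ?Q = {?cI (x,0), ?cI (x,1)}"
    unfolding Qeq by (rule classes_pair[of "rstep C K ?I", OF rstep_sym[OF g] sI(1) sI(2)])
  have cT1: "card (?cT ` ?Q) \<ge> 1" unfolding eT by (rule card_two_ge)
  have cI2: "card (?cI ` ?Q) \<le> 2" unfolding eI by (rule card_two_le)
  show "NN C K ?I \<le> NN C K T + 1" using cmp cT1 cI2 by linarith
  assume ng: "\<not> (gstep C K T)\<^sup>*\<^sup>* (x,0) (x,2)"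
  have nr: "\<not> (rstep C K T)\<^sup>*\<^sup>* (x,0) (x,2)"
    using ng rtp_mono[of "rstep C K T" "gstep C K T", OF r_le_g] by blast
  have "?cT (x,0) \<noteq> ?cT (x,2)" using nr by auto
  then have cT2: "card (?cT ` ?Q) = 2" unfolding eT by simp
  have "(rstep C K ?I)\<^sup>*\<^sup>* (x,0) (x,1)" by (rule parity_merge[OF g x xT nr])
  then have "?cI (x,0) = ?cI (x,1)" using rtp_cls_eq[of "rstep C K ?I", OF rstep_sym[OF g]] by blast
  then have cI1: "card (?cI ` ?Q) = 1" unfolding eI by simp
  show "NN C K ?I + 1 \<le> NN C K T" using cmp cT2 cI1 by linarith
qed

lemma G_step:
  assumes g: "goodK C K" and x: "x \<in> fst ` K" and xT: "x \<notin> T"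
  shows "GG C K T \<le> GG C K (insert x T) + 1"
    and "(gstep C K T)\<^sup>*\<^sup>* (x,0) (x,2) \<Longrightarrow> GG C K T \<le> GG C K (insert x T)"
proof -
  let ?I = "insert x T"
  let ?Q = "{x} \<times> {0..<4::nat}"
  let ?cT = "\<lambda>c. {y. (gstep C K T)\<^sup>*\<^sup>* c y}"
  let ?cI = "\<lambda>c. {y. (gstep C K ?I)\<^sup>*\<^sup>* c y}"
  have cmp: "GG C K T + card (?cI ` ?Q) = GG C K ?I + card (?cT ` ?Q)"
    unfolding GG_def
    by (rule cls_count_compare[of "gstep C K T" "gstep C K ?I", OF gstep_sym[OF g] gstep_sym[OF g] agree_ins_g[OF g] goodK_fin[OF g] Q3[OF g x]])
  have K: "(x,0) \<in> K" "(x,1) \<in> K" "(x,2) \<in> K" "(x,3) \<in> K" using Q1[OF g x] by auto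
  have sT: "gstep C K T (x,0) (x,1)" "gstep C K T (x,2) (x,3)"
    unfolding gstep_def tauT_def spair_def using K by auto
  have eT: "?cT ` ?Q = {?cT (x,0), ?cT (x,2)}"
    unfolding Q2 using classes_pair[of "gstep C K T", OF gstep_sym[OF g] sT(1) sT(2)] by simp
  have sI: "gstep C K ?I (x,0) c" if c: "c \<in> ?Q" for c
  proof -
    have "c \<in> K" using Q3[OF g x] c by blast
    moreover have "fst c = x" using c by (cases c) simp
    ultimately show ?thesis unfolding gstep_def using K(1) by simp
  qed
  have eqs: "?cI c = ?cI (x,0)" if "c \<in> ?Q" for c
    using rtp_cls_eq[of "gstep C K ?I", OF gstep_sym[OF g] r_into_rtranclp[of "gstep C K ?I", OF sI[OF that]]] by simp
  have sub: "?cI ` ?Q \<subseteq> {?cI (x,0)}" using eqs by blast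
  have "(x,0) \<in> ?Q" by simp
  then have "?cI ` ?Q = {?cI (x,0)}" using sub by blast
  then have cI1: "card (?cI ` ?Q) = 1" by simp
  have cT2: "card (?cT ` ?Q) \<le> 2" unfolding eT by (rule card_two_le)
  show "GG C K T \<le> GG C K ?I + 1" using cmp cT2 cI1 by linarith
  assume "(gstep C K T)\<^sup>*\<^sup>* (x,0) (x,2)"
  then have "?cT (x,0) = ?cT (x,2)" using rtp_cls_eq[of "gstep C K T", OF gstep_sym[OF g]] by blast
  then have "card (?cT ` ?Q) = 1" unfolding eT by simp
  then show "GG C K T \<le> GG C K ?I" using cmp cI1 by linarith
qed

lemma GN0: "GG C K {} = NN C K {}"
proof -
  have "gstep C K {} = rstep C K {}" unfolding gstep_def rstep_def by (intro ext) auto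
  then show ?thesis unfolding GG_def NN_def by simp
qed

lemma main_ind:
  assumes g: "goodK C K" and T: "T \<subseteq> fst ` K"
  shows "NN C K T + NN C K {} \<le> card T + 2 * GG C K T \<and> NN C K {} \<le> card T + GG C K T"
proof -
  have fin: "finite T" using T g unfolding goodK_def by (meson finite_subset)
  show ?thesis using fin T
  proof (induction T rule: finite_induct)
    case empty then show ?case using GN0[of C K] by simp
  next
    case (insert x F)
    have x: "x \<in> fst ` K" and F: "F \<subseteq> fst ` K" using insert.prems by auto
    have IH: "NN C K F + NN C K {} \<le> card F + 2 * GG C K F" "NN C K {} \<le> card F + GG C K F"
      using insert.IH[OF F] by auto
    have cI: "card (insert x F) = card F + 1" using insert.hyps by simp
    show ?case
    proof (cases "(gstep C K F)\<^sup>*\<^sup>* (x,0) (x,2)")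
      case True
      have "GG C K F \<le> GG C K (insert x F)" using G_step(2)[OF g x insert.hyps(2) True] .
      moreover have "NN C K (insert x F) \<le> NN C K F + 1" using N_step(1)[OF g x insert.hyps(2)] .
      ultimately show ?thesis using IH cI by linarith
    next
      case False
      have "GG C K F \<le> GG C K (insert x F) + 1" using G_step(1)[OF g x insert.hyps(2)] .
      moreover have "NN C K (insert x F) + 1 \<le> NN C K F" using N_step(2)[OF g x insert.hyps(2) False] .
      ultimately show ?thesis using IH cI by linarith
    qed
  qed
qed



lemma rtp_restrict:
  assumes f: "\<And>c d. c \<in> K \<Longrightarrow> R c d \<Longrightarrow> d \<in> K \<and> R' c d"
    and b: "\<And>c d. R' c d \<Longrightarrow> c \<in> K \<and> R c d"
    and c: "c \<in> K"
  shows "R\<^sup>*\<^sup>* c d = R'\<^sup>*\<^sup>* c d"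
proof
  assume "R\<^sup>*\<^sup>* c d"
  then have "R'\<^sup>*\<^sup>* c d \<and> d \<in> K"
  proof induction
    case base then show ?case using c by simp
  next
    case (step y z)
    then have "z \<in> K \<and> R' y z" using f by blast
    then show ?case using step by (auto intro: rtranclp.rtrancl_into_rtrancl)
  qed
  then show "R'\<^sup>*\<^sup>* c d" by simp
next
  assume "R'\<^sup>*\<^sup>* c d"
  then show "R\<^sup>*\<^sup>* c d"
  proof induction
    case base then show ?case by simp
  next
    case (step y z)
    then show ?case using b by (auto intro: rtranclp.rtrancl_into_rtrancl)
  qed
qed

lemma wf_basic:
  assumes "wf_cfg C"
  shows "finite (arcs C)" "finite (pas C)"
    "\<And>c. c \<in> corners C \<Longrightarrow> outer C c \<in> corners C \<and> outer C c \<noteq> c \<and> outer C (outer C c) = c"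
  using assms unfolding wf_cfg_def by blast+

lemma corners_mem: "c \<in> corners C \<longleftrightarrow> fst c \<in> arcs C \<and> snd c < 4"
  unfolding corners_def by (cases c) auto

lemma finite_corners: "wf_cfg C \<Longrightarrow> finite (corners C)"
  unfolding corners_def using wf_basic(1) by blast

lemma cstep_sym: "wf_cfg C \<Longrightarrow> cstep C c d \<Longrightarrow> cstep C d c"
  unfolding cstep_def using wf_basic(3) by metis

lemma cc_self: "c \<in> compclass C c"
  unfolding compclass_def by simp

lemma cc_eq: "wf_cfg C \<Longrightarrow> d \<in> compclass C c \<Longrightarrow> compclass C d = compclass C c"
  unfolding compclass_def using rtp_cls_eq[of "cstep C", OF cstep_sym] by blast

lemma cc_sub: "c \<in> corners C \<Longrightarrow> compclass C c \<subseteq> corners C"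
  unfolding compclass_def using rtp_stay[of "cstep C" "corners C"] cstep_def by blast

lemma goodK_of:
  assumes wf: "wf_cfg C" and c0: "c0 \<in> corners C"
  shows "goodK C (compclass C c0)"
proof -
  let ?K = "compclass C c0"
  have sub: "?K \<subseteq> corners C" using cc_sub[OF c0] .
  have fin: "finite (fst ` ?K)"
    using finite_subset[OF _ wf_basic(1)[OF wf], of "fst ` ?K"] sub corners_mem by blast
  have clo: "d \<in> ?K" if "c \<in> ?K" "cstep C c d" for c d
    using that unfolding compclass_def by (simp add: rtranclp.rtrancl_into_rtrancl)
  have eq: "?K = fst ` ?K \<times> {0..<4}"
  proof (intro equalityI subsetI)
    fix c assume c: "c \<in> ?K"
    then have "snd c < 4" using sub corners_mem by blast
    then show "c \<in> fst ` ?K \<times> {0..<4}" using c by (cases c) force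
  next
    fix c :: corner assume "c \<in> fst ` ?K \<times> {0..<4}"
    then obtain e and j :: nat and c' where cc: "c = (e, j)" "j < 4" "c' \<in> ?K" "fst c' = e" by auto
    have "c' \<in> corners C" using cc sub by blast
    then have "e \<in> arcs C" using cc corners_mem by blast
    then have "c \<in> corners C" using cc corners_mem by simp
    then have "cstep C c' c" unfolding cstep_def using cc \<open>c' \<in> corners C\<close> by simp
    then show "c \<in> ?K" using clo cc by blast
  qed
  have op: "outer C c \<in> ?K \<and> outer C c \<noteq> c \<and> outer C (outer C c) = c" if c: "c \<in> ?K" for c
  proof -
    have cC: "c \<in> corners C" using c sub by blast
    have o: "outer C c \<in> corners C" "outer C c \<noteq> c" "outer C (outer C c) = c" using wf_basic(3)[OF wf cC] by auto
    have "cstep C c (outer C c)" unfolding cstep_def using cC o by simp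
    then show ?thesis using clo c o by blast
  qed
  show ?thesis unfolding goodK_def using fin eq op by blast
qed

lemma sclass_eq:
  assumes wf: "wf_cfg C" and c0: "c0 \<in> corners C" and K: "K = compclass C c0" and c: "c \<in> K"
  shows "sclass C c = {x. (rstep C K {})\<^sup>*\<^sup>* c x}"
proof -
  have sub: "K \<subseteq> corners C" using cc_sub[OF c0] K by simp
  have clo: "d \<in> K" if "c \<in> K" "cstep C c d" for c d
    using that K unfolding compclass_def by (simp add: rtranclp.rtrancl_into_rtrancl)
  have "(sstep C)\<^sup>*\<^sup>* c d = (rstep C K {})\<^sup>*\<^sup>* c d" for d
  proof (rule rtp_restrict[OF _ _ c])
    fix c d assume cK: "c \<in> K" and s: "sstep C c d"
    then have "cstep C c d" unfolding sstep_def cstep_def by auto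
    then have dK: "d \<in> K" using clo cK by blast
    have "d = outer C c \<or> d = tauT {} c" using s unfolding sstep_def tauT_def by (cases d) auto
    then show "d \<in> K \<and> rstep C K {} c d" unfolding rstep_def using cK dK by simp
  next
    fix c d assume r: "rstep C K {} c d"
    then have "c \<in> corners C" "d \<in> corners C" using sub unfolding rstep_def by auto
    then show "c \<in> K \<and> sstep C c d" using r unfolding rstep_def sstep_def tauT_def by auto
  qed
  then show ?thesis unfolding sclass_def by blast
qed

lemma eclass_eq:
  assumes wf: "wf_cfg C" and c0: "c0 \<in> corners C" and K: "K = compclass C c0" and c: "c \<in> K"
  shows "eclass C c = {x. (rstep C K (fst ` K))\<^sup>*\<^sup>* c x}"
proof -
  have sub: "K \<subseteq> corners C" using cc_sub[OF c0] K by simp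
  have clo: "d \<in> K" if "c \<in> K" "cstep C c d" for c d
    using that K unfolding compclass_def by (simp add: rtranclp.rtrancl_into_rtrancl)
  have "(estep C)\<^sup>*\<^sup>* c d = (rstep C K (fst ` K))\<^sup>*\<^sup>* c d" for d
  proof (rule rtp_restrict[OF _ _ c])
    fix c d assume cK: "c \<in> K" and s: "estep C c d"
    then have "cstep C c d" unfolding estep_def cstep_def by auto
    then have dK: "d \<in> K" using clo cK by blast
    have "fst c \<in> fst ` K" using cK by blast
    then have "d = outer C c \<or> d = tauT (fst ` K) c" using s unfolding estep_def tauT_def by (cases d) auto
    then show "d \<in> K \<and> rstep C K (fst ` K) c d" unfolding rstep_def using cK dK by simp
  next
    fix c d assume r: "rstep C K (fst ` K) c d"
    then have "c \<in> corners C" "d \<in> corners C" "c \<in> K" using sub unfolding rstep_def by auto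
    then show "c \<in> K \<and> estep C c d" using r unfolding rstep_def estep_def tauT_def by auto
  qed
  then show ?thesis unfolding eclass_def by blast
qed

lemma cclass_eq:
  assumes wf: "wf_cfg C" and c0: "c0 \<in> corners C" and K: "K = compclass C c0" and c: "c \<in> K"
  shows "compclass C c = {x. (gstep C K (fst ` K))\<^sup>*\<^sup>* c x}"
proof -
  have sub: "K \<subseteq> corners C" using cc_sub[OF c0] K by simp
  have clo: "d \<in> K" if "c \<in> K" "cstep C c d" for c d
    using that K unfolding compclass_def by (simp add: rtranclp.rtrancl_into_rtrancl)
  have "(cstep C)\<^sup>*\<^sup>* c d = (gstep C K (fst ` K))\<^sup>*\<^sup>* c d" for d
  proof (rule rtp_restrict[OF _ _ c])
    fix c d assume cK: "c \<in> K" and s: "cstep C c d"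
    then have dK: "d \<in> K" using clo cK by blast
    have "fst c \<in> fst ` K" using cK by blast
    then have "d = outer C c \<or> (fst d = fst c \<and> fst c \<in> fst ` K)" using s unfolding cstep_def by auto
    then show "d \<in> K \<and> gstep C K (fst ` K) c d" unfolding gstep_def using cK dK by auto
  next
    fix c d assume r: "gstep C K (fst ` K) c d"
    then have "c \<in> corners C" "d \<in> corners C" "c \<in> K" using sub unfolding gstep_def by auto
    then show "c \<in> K \<and> cstep C c d" using r unfolding gstep_def cstep_def tauT_def by auto
  qed
  then show ?thesis unfolding compclass_def by blast
qed



lemma circ_card: "card ((\<lambda>c. Circ (f c)) ` K) = card (f ` K)"
proof -
  have "(\<lambda>c. Circ (f c)) ` K = Circ ` (f ` K)" by auto
  moreover have "inj Circ" by (simp add: inj_def)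
  ultimately show ?thesis by (simp add: card_image inj_on_subset)
qed

lemma ACs_obtain:
  assumes "K \<in> ACs C" obtains c0 where "c0 \<in> corners C" "K = compclass C c0"
  using assms unfolding ACs_def by blast

lemma comp_NN:
  assumes wf: "wf_cfg C" and K: "K \<in> ACs C"
  shows "card (SCK C K) = NN C K {}" "card (ECK C K) = NN C K (fst ` K)"
    "GG C K (fst ` K) = 1" "goodK C K" "K \<noteq> {}"
proof -
  obtain c0 where c0: "c0 \<in> corners C" "K = compclass C c0" using ACs_obtain[OF K] by blast
  have "sclass C ` K = (\<lambda>c. {x. (rstep C K {})\<^sup>*\<^sup>* c x}) ` K"
    using sclass_eq[OF wf c0(1) c0(2)] by (intro image_cong) auto
  then show "card (SCK C K) = NN C K {}" unfolding SCK_def NN_def circ_card by simp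
  have "eclass C ` K = (\<lambda>c. {x. (rstep C K (fst ` K))\<^sup>*\<^sup>* c x}) ` K"
    using eclass_eq[OF wf c0(1) c0(2)] by (intro image_cong) auto
  then show "card (ECK C K) = NN C K (fst ` K)" unfolding ECK_def NN_def circ_card by simp
  have ne: "c0 \<in> K" using c0 cc_self by simp
  then show "K \<noteq> {}" by blast
  have "(\<lambda>c. {x. (gstep C K (fst ` K))\<^sup>*\<^sup>* c x}) ` K = compclass C ` K"
    using cclass_eq[OF wf c0(1) c0(2)] by (intro image_cong) auto
  also have "... = {K}"
  proof -
    have "compclass C c = K" if "c \<in> K" for c using cc_eq[OF wf] that c0(2) by simp
    then show ?thesis using ne by blast
  qed
  finally show "GG C K (fst ` K) = 1" unfolding GG_def by simp
  show "goodK C K" using goodK_of[OF wf c0(1)] c0(2) by simp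
qed

lemma comp_bounds:
  assumes wf: "wf_cfg C" and K: "K \<in> ACs C"
  shows "card (SCK C K) + card (ECK C K) \<le> card (fst ` K) + 2"
    "card (SCK C K) \<le> card (fst ` K) + 1"
    "card (SCK C K) \<ge> 1" "card (ECK C K) \<ge> 1" "card (fst ` K) \<ge> 1"
proof -
  have g: "goodK C K" and ne: "K \<noteq> {}" using comp_NN[OF wf K] by auto
  have m: "NN C K (fst ` K) + NN C K {} \<le> card (fst ` K) + 2 * GG C K (fst ` K) \<and>
     NN C K {} \<le> card (fst ` K) + GG C K (fst ` K)"
    using main_ind[OF g] by simp
  then show "card (SCK C K) + card (ECK C K) \<le> card (fst ` K) + 2"
    "card (SCK C K) \<le> card (fst ` K) + 1" using comp_NN[OF wf K] by auto
  have finK: "finite K" using goodK_fin[OF g] .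
  show "card (SCK C K) \<ge> 1" using finK ne unfolding SCK_def
    by (simp add: Suc_leI card_gt_0_iff)
  show "card (ECK C K) \<ge> 1" using finK ne unfolding ECK_def
    by (simp add: Suc_leI card_gt_0_iff)
  show "card (fst ` K) \<ge> 1" using finK ne
    by (simp add: Suc_leI card_gt_0_iff)
qed

abbreviation uu :: "corner \<Rightarrow> corner" where "uu \<equiv> maph (\<lambda>e j. (j + 1) mod 4)"
abbreviation vv :: "corner \<Rightarrow> corner" where "vv \<equiv> maph (\<lambda>e j. (j + 3) mod 4)"

lemma uv_props:
  assumes "c \<in> corners C"
  shows "uu c \<in> corners C \<and> vv c \<in> corners C \<and> vv (uu c) = c \<and> uu (vv c) = c \<and> fst (uu c) = fst c \<and> fst (vv c) = fst c"
proof -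
  obtain e j where c: "c = (e, j)" by (cases c)
  have j: "j < 4" and e: "e \<in> arcs C" using assms c corners_mem by auto
  have u: "uu c = (e, (j + 1) mod 4)" and v: "vv c = (e, (j + 3) mod 4)" using c by (simp_all add: maph_def)
  have m: "((j + 1) mod 4 + 3) mod 4 = j" "((j + 3) mod 4 + 1) mod 4 = j"
  proof -
    have "j = 0 \<or> j = 1 \<or> j = 2 \<or> j = 3" using j by auto
    then show "((j + 1) mod 4 + 3) mod 4 = j" "((j + 3) mod 4 + 1) mod 4 = j" by auto
  qed
  have "(e, (j + 1) mod 4) \<in> corners C" "(e, (j + 3) mod 4) \<in> corners C"
    using e unfolding corners_mem by simp_all
  moreover have "vv (uu c) = c" unfolding u unfolding maph_def using m c by simp
  moreover have "uu (vv c) = c" unfolding v unfolding maph_def using m c by simp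
  ultimately show ?thesis using u v c by simp
qed

lemma undual_simps: "arcs (undual C) = arcs C" "corners (undual C) = corners C"
  "outer (undual C) c = uu (outer C (vv c))"
  unfolding undual_def relab_def corners_def by simp_all

lemma snd_sw1: "a < 4 \<Longrightarrow> b < 4 \<Longrightarrow> (b = spair a) = ((b + 3) mod 4 = epair ((a + 3) mod 4))"
proof -
  assume "a < 4" "b < 4"
  then have "a = 0 \<or> a = 1 \<or> a = 2 \<or> a = 3" "b = 0 \<or> b = 1 \<or> b = 2 \<or> b = 3" by auto
  then show ?thesis by (elim disjE) (simp_all add: spair_def epair_def)
qed

lemma snd_sw2: "a < 4 \<Longrightarrow> b < 4 \<Longrightarrow> (b = epair a) = ((b + 3) mod 4 = spair ((a + 3) mod 4))"
proof -
  assume "a < 4" "b < 4"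
  then have "a = 0 \<or> a = 1 \<or> a = 2 \<or> a = 3" "b = 0 \<or> b = 1 \<or> b = 2 \<or> b = 3" by auto
  then show ?thesis by (elim disjE) (simp_all add: spair_def epair_def)
qed

lemma outer_sw:
  assumes wf: "wf_cfg C" and c: "c \<in> corners C" and d: "d \<in> corners C"
  shows "(d = outer (undual C) c) = (vv d = outer C (vv c))"
proof -
  have vc: "vv c \<in> corners C" using uv_props[OF c] by blast
  have o: "outer C (vv c) \<in> corners C" using wf_basic(3)[OF wf vc] by blast
  have a: "vv (uu (outer C (vv c))) = outer C (vv c)" using uv_props[OF o] by blast
  have b: "uu (vv d) = d" using uv_props[OF d] by blast
  show ?thesis
  proof
    assume "d = outer (undual C) c"
    then have "d = uu (outer C (vv c))" using undual_simps(3)[of C c] by simp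
    then show "vv d = outer C (vv c)" using a by simp
  next
    assume "vv d = outer C (vv c)"
    then have "uu (vv d) = uu (outer C (vv c))" by simp
    then show "d = outer (undual C) c" using undual_simps(3)[of C c] b by simp
  qed
qed

lemma sstep_undual:
  assumes wf: "wf_cfg C"
  shows "sstep (undual C) c d = (c \<in> corners C \<and> d \<in> corners C \<and> estep C (vv c) (vv d))"
proof (cases "c \<in> corners C \<and> d \<in> corners C")
  case True
  then have c: "c \<in> corners C" and d: "d \<in> corners C" by auto
  have sc: "snd c < 4" "snd d < 4" using c d corners_mem by auto
  have vin: "vv c \<in> corners C" "vv d \<in> corners C" using uv_props c d by blast+
  have "(fst d = fst c \<and> snd d = spair (snd c)) = (fst (vv d) = fst (vv c) \<and> snd (vv d) = epair (snd (vv c)))"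
    using snd_sw1[OF sc] unfolding maph_def by simp
  then show ?thesis unfolding sstep_def estep_def undual_simps(2) using outer_sw[OF wf c d] c d vin by simp
next
  case False then show ?thesis unfolding sstep_def undual_simps(2) by auto
qed

lemma estep_undual:
  assumes wf: "wf_cfg C"
  shows "estep (undual C) c d = (c \<in> corners C \<and> d \<in> corners C \<and> sstep C (vv c) (vv d))"
proof (cases "c \<in> corners C \<and> d \<in> corners C")
  case True
  then have c: "c \<in> corners C" and d: "d \<in> corners C" by auto
  have sc: "snd c < 4" "snd d < 4" using c d corners_mem by auto
  have vin: "vv c \<in> corners C" "vv d \<in> corners C" using uv_props c d by blast+
  have "(fst d = fst c \<and> snd d = epair (snd c)) = (fst (vv d) = fst (vv c) \<and> snd (vv d) = spair (snd (vv c)))"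
    using snd_sw2[OF sc] unfolding maph_def by simp
  then show ?thesis unfolding sstep_def estep_def undual_simps(2) using outer_sw[OF wf c d] c d vin by simp
next
  case False then show ?thesis unfolding estep_def undual_simps(2) by auto
qed

lemma rtp_transfer:
  assumes X: "\<And>c. c \<in> X \<Longrightarrow> u c \<in> X \<and> v c \<in> X \<and> v (u c) = c \<and> u (v c) = c"
    and R': "\<And>c d. R' c d = (c \<in> X \<and> d \<in> X \<and> R (v c) (v d))"
    and R: "\<And>c d. R c d \<Longrightarrow> c \<in> X \<and> d \<in> X"
    and c: "c \<in> X"
  shows "{d. R'\<^sup>*\<^sup>* (u c) d} = u ` {d. R\<^sup>*\<^sup>* c d}"
proof (intro equalityI subsetI)
  fix d assume "d \<in> {d. R'\<^sup>*\<^sup>* (u c) d}"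
  then have "R'\<^sup>*\<^sup>* (u c) d" by simp
  then show "d \<in> u ` {d. R\<^sup>*\<^sup>* c d}"
  proof induction
    case base then show ?case by simp
  next
    case (step y z)
    from step(3) obtain y0 where y0: "y = u y0" "R\<^sup>*\<^sup>* c y0" by auto
    have yz: "y \<in> X" "z \<in> X" "R (v y) (v z)" using step(2) R' by auto
    have y0X: "y0 \<in> X"
    proof (cases "y0 = c")
      case True then show ?thesis using c by simp
    next
      case False
      then obtain w where "R w y0" using y0(2) by (metis rtranclp.cases)
      then show ?thesis using R by blast
    qed
    have "v y = y0" using y0(1) X[OF y0X] by simp
    then have "R\<^sup>*\<^sup>* c (v z)" using y0(2) yz(3) by (simp add: rtranclp.rtrancl_into_rtrancl)
    moreover have "z = u (v z)" using X[OF yz(2)] by simp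
    ultimately show ?case by blast
  qed
next
  fix d assume "d \<in> u ` {d. R\<^sup>*\<^sup>* c d}"
  then obtain d0 where d0: "d = u d0" "R\<^sup>*\<^sup>* c d0" by auto
  from d0(2) have "R'\<^sup>*\<^sup>* (u c) (u d0)"
  proof induction
    case base then show ?case by simp
  next
    case (step y z)
    have yz: "y \<in> X" "z \<in> X" using R[OF step(2)] by auto
    have "R' (u y) (u z)" using R' X[OF yz(1)] X[OF yz(2)] step(2) by simp
    then show ?case using step(3) by (simp add: rtranclp.rtrancl_into_rtrancl)
  qed
  then show "d \<in> {d. R'\<^sup>*\<^sup>* (u c) d}" using d0 by simp
qed

lemma sclass_undual:
  assumes wf: "wf_cfg C" and c: "c \<in> corners C"
  shows "sclass (undual C) (uu c) = uu ` eclass C c"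
  unfolding sclass_def eclass_def
  by (rule rtp_transfer[where X="corners C"]) (use uv_props sstep_undual[OF wf] c estep_def in auto)

lemma eclass_undual:
  assumes wf: "wf_cfg C" and c: "c \<in> corners C"
  shows "eclass (undual C) (uu c) = uu ` sclass C c"
  unfolding sclass_def eclass_def
  by (rule rtp_transfer[where X="corners C"]) (use uv_props estep_undual[OF wf] c sstep_def in auto)

lemma sclass_sub: "sclass C c \<subseteq> corners C \<union> {c}"
  unfolding sclass_def by (auto elim: rtranclp.cases simp: sstep_def)

lemma eclass_sub: "eclass C c \<subseteq> corners C \<union> {c}"
  unfolding eclass_def by (auto elim: rtranclp.cases simp: estep_def)

lemma card_uu_img:
  assumes "\<And>c. c \<in> K \<Longrightarrow> f c \<subseteq> corners C" and inj: "inj_on uu (corners C)"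
  shows "card ((\<lambda>c. Circ (uu ` f c)) ` K) = card (f ` K)"
proof -
  have "(\<lambda>c. Circ (uu ` f c)) ` K = (\<lambda>S. Circ (uu ` S)) ` (f ` K)" by auto
  moreover have "inj_on (\<lambda>S. Circ (uu ` S)) (f ` K)"
  proof (rule inj_onI)
    fix S S' assume S: "S \<in> f ` K" "S' \<in> f ` K" and eq: "Circ (uu ` S) = Circ (uu ` S')"
    have "S \<subseteq> corners C" "S' \<subseteq> corners C" using S assms(1) by auto
    then show "S = S'" using eq inj by (simp add: inj_on_image_eq_iff)
  qed
  ultimately show ?thesis by (simp add: card_image)
qed

lemma dtree_iff:
  assumes wf: "wf_cfg C" and K: "K \<in> ACs C"
  shows "dtree_comp C K = (card (ECK C K) = card (fst ` K) + 1 \<and> card (SCK C K) = 1)"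
proof -
  obtain c0 where c0: "c0 \<in> corners C" "K = compclass C c0" using ACs_obtain[OF K] by blast
  have KC: "K \<subseteq> corners C" using cc_sub[OF c0(1)] c0(2) by simp
  have inj: "inj_on uu (corners C)" by (rule inj_onI) (metis uv_props)
  have esub: "eclass C c \<subseteq> corners C" if "c \<in> K" for c using eclass_sub[of C c] KC that by blast
  have ssub: "sclass C c \<subseteq> corners C" if "c \<in> K" for c using sclass_sub[of C c] KC that by blast
  have "SCK (undual C) (uu ` K) = (\<lambda>c. Circ (sclass (undual C) (uu c))) ` K"
    unfolding SCK_def by (simp add: image_image)
  also have "... = (\<lambda>c. Circ (uu ` eclass C c)) ` K"
    by (rule image_cong) (use sclass_undual[OF wf] KC in auto)
  finally have "SCK (undual C) (uu ` K) = (\<lambda>c. Circ (uu ` eclass C c)) ` K" .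
  then have "card (SCK (undual C) (uu ` K)) = card (eclass C ` K)"
    using card_uu_img[of K "eclass C" C, OF esub inj] by simp
  moreover have "card (ECK C K) = card (eclass C ` K)" unfolding ECK_def by (rule circ_card)
  ultimately have s: "card (SCK (undual C) (uu ` K)) = card (ECK C K)" by simp
  have "ECK (undual C) (uu ` K) = (\<lambda>c. Circ (eclass (undual C) (uu c))) ` K"
    unfolding ECK_def by (simp add: image_image)
  also have "... = (\<lambda>c. Circ (uu ` sclass C c)) ` K"
    by (rule image_cong) (use eclass_undual[OF wf] KC in auto)
  finally have "ECK (undual C) (uu ` K) = (\<lambda>c. Circ (uu ` sclass C c)) ` K" .
  then have "card (ECK (undual C) (uu ` K)) = card (sclass C ` K)"
    using card_uu_img[of K "sclass C" C, OF ssub inj] by simp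
  moreover have "card (SCK C K) = card (sclass C ` K)" unfolding SCK_def by (rule circ_card)
  ultimately have e: "card (ECK (undual C) (uu ` K)) = card (SCK C K)" by simp
  have f: "fst ` (uu ` K) = fst ` K" unfolding maph_def by (auto simp: image_image)
  show ?thesis unfolding dtree_comp_def tree_comp_def s e f by simp
qed



lemma arith_comp:
  fixes s e k al be :: nat
  assumes "s + e \<le> k + 2" "s \<le> k + 1" "1 \<le> s" "1 \<le> e" "1 \<le> k" "al \<le> s" "be \<le> e"
    "al = s \<longrightarrow> be = e" "0 < al \<longrightarrow> 0 < be"
  shows "int s - int e + int k - 2 * int al + 2 * int be \<ge> 0"
    "int s - int e + int k - 2 * int al + 2 * int be = 0 \<Longrightarrow>
       (al = s \<and> be = e \<and> s = k + 1 \<and> e = 1) \<or> (al = 0 \<and> be = 0 \<and> s = 1 \<and> e = k + 1)"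
proof -
  have "(al = s) \<or> (al = 0) \<or> (0 < al \<and> al < s)" using assms(6) by linarith
  then show "int s - int e + int k - 2 * int al + 2 * int be \<ge> 0" using assms by auto
  assume z: "int s - int e + int k - 2 * int al + 2 * int be = 0"
  have "(al = s) \<or> (al = 0) \<or> (0 < al \<and> al < s)" using assms(6) by linarith
  then show "(al = s \<and> be = e \<and> s = k + 1 \<and> e = 1) \<or> (al = 0 \<and> be = 0 \<and> s = 1 \<and> e = k + 1)"
  proof (elim disjE)
    assume "al = s" then show ?thesis using assms z by auto
  next
    assume "al = 0" then show ?thesis using assms z by auto
  next
    assume "0 < al \<and> al < s" then show ?thesis using assms z by auto
  qed
qed

lemma card_decomp:
  assumes fI: "finite I" and fg: "\<And>i. i \<in> I \<Longrightarrow> finite (g i)" and fP: "finite P"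
    and dj: "\<And>i j. i \<in> I \<Longrightarrow> j \<in> I \<Longrightarrow> i \<noteq> j \<Longrightarrow> g i \<inter> g j = {}"
    and dP: "\<And>i. i \<in> I \<Longrightarrow> g i \<inter> P = {}"
    and a: "a \<subseteq> (\<Union>i\<in>I. g i) \<union> P"
  shows "card a = (\<Sum>i\<in>I. card (a \<inter> g i)) + card (a \<inter> P)"
proof -
  have eq: "a = (\<Union>i\<in>I. a \<inter> g i) \<union> (a \<inter> P)" using a by blast
  have d1: "(\<Union>i\<in>I. a \<inter> g i) \<inter> (a \<inter> P) = {}" using dP by blast
  have f1: "finite (\<Union>i\<in>I. a \<inter> g i)" using fI fg by blast
  have "card a = card (\<Union>i\<in>I. a \<inter> g i) + card (a \<inter> P)"
    by (subst eq, rule card_Un_disjoint) (use f1 fP d1 in auto)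
  moreover have "card (\<Union>i\<in>I. a \<inter> g i) = (\<Sum>i\<in>I. card (a \<inter> g i))"
    by (rule card_UN_disjoint) (use fI fg dj in auto)
  ultimately show ?thesis by simp
qed

lemma ACs_fin: "wf_cfg C \<Longrightarrow> finite (ACs C)"
  unfolding ACs_def using finite_corners by blast

lemma ACs_disj:
  assumes wf: "wf_cfg C" and K: "K \<in> ACs C" and K': "K' \<in> ACs C" and c: "c \<in> K" and c': "c \<in> K'"
  shows "K = K'"
proof -
  obtain c0 where c0: "c0 \<in> corners C" "K = compclass C c0" using ACs_obtain[OF K] by blast
  obtain c1 where c1: "c1 \<in> corners C" "K' = compclass C c1" using ACs_obtain[OF K'] by blast
  have "compclass C c = K" using cc_eq[OF wf] c c0 by simp
  moreover have "compclass C c = K'" using cc_eq[OF wf] c' c1 by simp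
  ultimately show ?thesis by simp
qed

lemma ACs_sub: "K \<in> ACs C \<Longrightarrow> K \<subseteq> corners C"
  using ACs_obtain cc_sub by metis

lemma ACs_union: "\<Union>(ACs C) = corners C"
proof (intro equalityI subsetI)
  fix c assume "c \<in> \<Union>(ACs C)" then show "c \<in> corners C" using ACs_sub by blast
next
  fix c assume "c \<in> corners C"
  then have "compclass C c \<in> ACs C" unfolding ACs_def by blast
  then show "c \<in> \<Union>(ACs C)" using cc_self by blast
qed

lemma sclass_in_cc: "sclass C c \<subseteq> compclass C c"
  unfolding sclass_def compclass_def
  using rtp_mono[of "sstep C" "cstep C"] unfolding sstep_def cstep_def by blast

lemma eclass_in_cc: "eclass C c \<subseteq> compclass C c"
  unfolding eclass_def compclass_def
  using rtp_mono[of "estep C" "cstep C"] unfolding estep_def cstep_def by blast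

lemma sclass_self: "c \<in> sclass C c" unfolding sclass_def by simp
lemma eclass_self: "c \<in> eclass C c" unfolding eclass_def by simp

lemma SCK_disj:
  assumes wf: "wf_cfg C" and K: "K \<in> ACs C" and K': "K' \<in> ACs C" and ne: "K \<noteq> K'"
  shows "SCK C K \<inter> SCK C K' = {}"
proof (rule ccontr)
  assume "SCK C K \<inter> SCK C K' \<noteq> {}"
  then obtain c c' where c: "c \<in> K" "c' \<in> K'" "sclass C c = sclass C c'" unfolding SCK_def by auto
  obtain c0 where c0: "c0 \<in> corners C" "K = compclass C c0" using ACs_obtain[OF K] by blast
  have "c' \<in> compclass C c" using c(3) sclass_self[of c' C] sclass_in_cc[of C c] by blast
  then have "c' \<in> K" using cc_eq[OF wf] c(1) c0(2) by blast
  then show False using ACs_disj[OF wf K K' _ c(2)] ne by blast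
qed

lemma ECK_disj:
  assumes wf: "wf_cfg C" and K: "K \<in> ACs C" and K': "K' \<in> ACs C" and ne: "K \<noteq> K'"
  shows "ECK C K \<inter> ECK C K' = {}"
proof (rule ccontr)
  assume "ECK C K \<inter> ECK C K' \<noteq> {}"
  then obtain c c' where c: "c \<in> K" "c' \<in> K'" "eclass C c = eclass C c'" unfolding ECK_def by auto
  obtain c0 where c0: "c0 \<in> corners C" "K = compclass C c0" using ACs_obtain[OF K] by blast
  have "c' \<in> compclass C c" using c(3) eclass_self[of c' C] eclass_in_cc[of C c] by blast
  then have "c' \<in> K" using cc_eq[OF wf] c(1) c0(2) by blast
  then show False using ACs_disj[OF wf K K' _ c(2)] ne by blast
qed

lemma arcs_disj:
  assumes wf: "wf_cfg C" and K: "K \<in> ACs C" and K': "K' \<in> ACs C" and ne: "K \<noteq> K'"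
  shows "fst ` K \<inter> fst ` K' = {}"
proof (rule ccontr)
  assume "fst ` K \<inter> fst ` K' \<noteq> {}"
  then obtain c c' where c: "c \<in> K" "c' \<in> K'" "fst c = fst c'" by auto
  obtain c0 where c0: "c0 \<in> corners C" "K = compclass C c0" using ACs_obtain[OF K] by blast
  have "c \<in> corners C" "c' \<in> corners C" using c ACs_sub K K' by blast+
  then have "cstep C c c'" unfolding cstep_def using c(3) by simp
  then have "c' \<in> compclass C c" unfolding compclass_def by simp
  then have "c' \<in> K" using cc_eq[OF wf] c(1) c0(2) by blast
  then show False using ACs_disj[OF wf K K' _ c(2)] ne by blast
qed

lemma SC_decomp: "SC C = (\<Union>K\<in>ACs C. SCK C K) \<union> PasC ` pas C"
proof -
  have "(\<lambda>c. Circ (sclass C c)) ` corners C = (\<lambda>c. Circ (sclass C c)) ` (\<Union>(ACs C))"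
    using ACs_union[of C] by simp
  also have "... = (\<Union>K\<in>ACs C. SCK C K)" unfolding SCK_def by (rule image_Union)
  finally show ?thesis unfolding SC_def by simp
qed

lemma EC_decomp: "EC C = (\<Union>K\<in>ACs C. ECK C K) \<union> PasC ` pas C"
proof -
  have "(\<lambda>c. Circ (eclass C c)) ` corners C = (\<lambda>c. Circ (eclass C c)) ` (\<Union>(ACs C))"
    using ACs_union[of C] by simp
  also have "... = (\<Union>K\<in>ACs C. ECK C K)" unfolding ECK_def by (rule image_Union)
  finally show ?thesis unfolding EC_def by simp
qed

lemma arcs_decomp: "arcs C = (\<Union>K\<in>ACs C. fst ` K)"
proof -
  have "arcs C = fst ` corners C"
  proof (intro equalityI subsetI)
    fix e assume "e \<in> arcs C" then have "(e, 0) \<in> corners C" using corners_mem by simp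
    then show "e \<in> fst ` corners C" by force
  next
    fix e assume "e \<in> fst ` corners C"
    then obtain c where "c \<in> corners C" "e = fst c" by blast
    then show "e \<in> arcs C" using corners_mem by blast
  qed
  also have "... = fst ` (\<Union>(ACs C))" using ACs_union[of C] by simp
  also have "... = (\<Union>K\<in>ACs C. fst ` K)" by (rule image_Union)
  finally show ?thesis .
qed

lemma fin_K: "wf_cfg C \<Longrightarrow> K \<in> ACs C \<Longrightarrow> finite K"
  by (rule finite_subset[OF ACs_sub finite_corners])
lemma fin_SCK: "wf_cfg C \<Longrightarrow> K \<in> ACs C \<Longrightarrow> finite (SCK C K)"
  unfolding SCK_def by (rule finite_imageI, rule fin_K)
lemma fin_ECK: "wf_cfg C \<Longrightarrow> K \<in> ACs C \<Longrightarrow> finite (ECK C K)"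
  unfolding ECK_def by (rule finite_imageI, rule fin_K)
lemma fin_fstK: "wf_cfg C \<Longrightarrow> K \<in> ACs C \<Longrightarrow> finite (fst ` K)"
  by (rule finite_imageI, rule fin_K)

lemma card_SC_split:
  assumes wf: "wf_cfg C" and a: "a \<subseteq> SC C"
  shows "card a = (\<Sum>K\<in>ACs C. card (a \<inter> SCK C K)) + card (a \<inter> PasC ` pas C)"
proof -
  have dj: "\<And>i j. i \<in> ACs C \<Longrightarrow> j \<in> ACs C \<Longrightarrow> i \<noteq> j \<Longrightarrow> SCK C i \<inter> SCK C j = {}"
    by (rule SCK_disj[OF wf])
  have dP: "\<And>i. i \<in> ACs C \<Longrightarrow> SCK C i \<inter> PasC ` pas C = {}" unfolding SCK_def by blast
  have fP: "finite (PasC ` pas C)" using wf_basic(2)[OF wf] by simp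
  have a': "a \<subseteq> (\<Union>K\<in>ACs C. SCK C K) \<union> PasC ` pas C" using a SC_decomp[of C] by simp
  show ?thesis by (rule card_decomp[OF ACs_fin[OF wf] fin_SCK[OF wf] fP dj dP a'])
qed

lemma card_EC_split:
  assumes wf: "wf_cfg C" and a: "a \<subseteq> EC C"
  shows "card a = (\<Sum>K\<in>ACs C. card (a \<inter> ECK C K)) + card (a \<inter> PasC ` pas C)"
proof -
  have dj: "\<And>i j. i \<in> ACs C \<Longrightarrow> j \<in> ACs C \<Longrightarrow> i \<noteq> j \<Longrightarrow> ECK C i \<inter> ECK C j = {}"
    by (rule ECK_disj[OF wf])
  have dP: "\<And>i. i \<in> ACs C \<Longrightarrow> ECK C i \<inter> PasC ` pas C = {}" unfolding ECK_def by blast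
  have fP: "finite (PasC ` pas C)" using wf_basic(2)[OF wf] by simp
  have a': "a \<subseteq> (\<Union>K\<in>ACs C. ECK C K) \<union> PasC ` pas C" using a EC_decomp[of C] by simp
  show ?thesis by (rule card_decomp[OF ACs_fin[OF wf] fin_ECK[OF wf] fP dj dP a'])
qed

lemma card_arcs_split:
  assumes wf: "wf_cfg C"
  shows "card (arcs C) = (\<Sum>K\<in>ACs C. card (fst ` K))"
proof -
  have dj: "\<forall>i\<in>ACs C. \<forall>j\<in>ACs C. i \<noteq> j \<longrightarrow> fst ` i \<inter> fst ` j = {}"
    using arcs_disj[OF wf] by blast
  have f: "\<forall>K\<in>ACs C. finite (fst ` K)" using fin_fstK[OF wf] by blast
  show ?thesis unfolding arcs_decomp[of C] by (rule card_UN_disjoint[OF ACs_fin[OF wf] f dj])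
qed



lemma comp_facts:
  assumes wf: "wf_cfg C" and K: "K \<in> ACs C"
    and fc: "\<forall>c\<in>corners C. Circ (sclass C c) \<in> a \<longrightarrow> Circ (eclass C c) \<in> b"
  shows "card (a \<inter> SCK C K) \<le> card (SCK C K)" "card (b \<inter> ECK C K) \<le> card (ECK C K)"
    "card (a \<inter> SCK C K) = card (SCK C K) \<longrightarrow> card (b \<inter> ECK C K) = card (ECK C K)"
    "0 < card (a \<inter> SCK C K) \<longrightarrow> 0 < card (b \<inter> ECK C K)"
proof -
  have fS: "finite (SCK C K)" and fE: "finite (ECK C K)" using fin_SCK[OF wf K] fin_ECK[OF wf K] .
  have KC: "K \<subseteq> corners C" using ACs_sub[OF K] .
  show "card (a \<inter> SCK C K) \<le> card (SCK C K)" by (rule card_mono[OF fS]) blast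
  show "card (b \<inter> ECK C K) \<le> card (ECK C K)" by (rule card_mono[OF fE]) blast
  show "card (a \<inter> SCK C K) = card (SCK C K) \<longrightarrow> card (b \<inter> ECK C K) = card (ECK C K)"
  proof
    assume "card (a \<inter> SCK C K) = card (SCK C K)"
    then have "a \<inter> SCK C K = SCK C K" using card_subset_eq[OF fS, of "a \<inter> SCK C K"] by blast
    then have "Circ (sclass C c) \<in> a" if "c \<in> K" for c using that unfolding SCK_def by blast
    then have "Circ (eclass C c) \<in> b" if "c \<in> K" for c using that fc KC by blast
    then have "b \<inter> ECK C K = ECK C K" unfolding ECK_def by blast
    then show "card (b \<inter> ECK C K) = card (ECK C K)" by simp
  qed
  show "0 < card (a \<inter> SCK C K) \<longrightarrow> 0 < card (b \<inter> ECK C K)"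
  proof
    assume "0 < card (a \<inter> SCK C K)"
    then have "a \<inter> SCK C K \<noteq> {}" by (metis card.empty less_irrefl)
    then obtain c where c: "c \<in> K" "Circ (sclass C c) \<in> a" unfolding SCK_def by blast
    then have "Circ (eclass C c) \<in> b \<inter> ECK C K" using fc KC unfolding ECK_def by blast
    then show "0 < card (b \<inter> ECK C K)" using fE by (metis card_gt_0_iff finite_Int empty_iff)
  qed
qed

definition DD :: "cfg \<Rightarrow> circ set \<Rightarrow> circ set \<Rightarrow> corner set \<Rightarrow> int" where
  "DD C a b K = int (card (SCK C K)) - int (card (ECK C K)) + int (card (fst ` K))
      - 2 * int (card (a \<inter> SCK C K)) + 2 * int (card (b \<inter> ECK C K))"

lemma DD_nonneg:
  assumes wf: "wf_cfg C" and K: "K \<in> ACs C"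
    and fc: "\<forall>c\<in>corners C. Circ (sclass C c) \<in> a \<longrightarrow> Circ (eclass C c) \<in> b"
  shows "DD C a b K \<ge> 0"
  unfolding DD_def
  by (rule arith_comp(1)) (use comp_bounds[OF wf K] comp_facts[OF wf K fc] in auto)

lemma DD_zero:
  assumes wf: "wf_cfg C" and K: "K \<in> ACs C"
    and fc: "\<forall>c\<in>corners C. Circ (sclass C c) \<in> a \<longrightarrow> Circ (eclass C c) \<in> b"
    and z: "DD C a b K = 0"
  shows "(tree_comp C K \<and> \<not> dtree_comp C K \<and> SCK C K \<subseteq> a \<and> ECK C K \<subseteq> b) \<or>
         (dtree_comp C K \<and> \<not> tree_comp C K \<and> SCK C K \<inter> a = {} \<and> ECK C K \<inter> b = {})"
proof -
  have fS: "finite (SCK C K)" and fE: "finite (ECK C K)" using fin_SCK[OF wf K] fin_ECK[OF wf K] .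
  have cb: "card (fst ` K) \<ge> 1" using comp_bounds[OF wf K] by simp
  have "(card (a \<inter> SCK C K) = card (SCK C K) \<and> card (b \<inter> ECK C K) = card (ECK C K) \<and>
          card (SCK C K) = card (fst ` K) + 1 \<and> card (ECK C K) = 1) \<or>
        (card (a \<inter> SCK C K) = 0 \<and> card (b \<inter> ECK C K) = 0 \<and>
          card (SCK C K) = 1 \<and> card (ECK C K) = card (fst ` K) + 1)"
    by (rule arith_comp(2)) (use comp_bounds[OF wf K] comp_facts[OF wf K fc] z[unfolded DD_def] in auto)
  then show ?thesis
  proof (elim disjE conjE)
    assume h: "card (a \<inter> SCK C K) = card (SCK C K)" "card (b \<inter> ECK C K) = card (ECK C K)"
      "card (SCK C K) = card (fst ` K) + 1" "card (ECK C K) = 1"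
    have "a \<inter> SCK C K = SCK C K" using card_subset_eq[OF fS, of "a \<inter> SCK C K"] h(1) by blast
    moreover have "b \<inter> ECK C K = ECK C K" using card_subset_eq[OF fE, of "b \<inter> ECK C K"] h(2) by blast
    moreover have "tree_comp C K" unfolding tree_comp_def using h by simp
    moreover have "\<not> dtree_comp C K" using dtree_iff[OF wf K] h cb by simp
    ultimately show ?thesis by blast
  next
    assume h: "card (a \<inter> SCK C K) = 0" "card (b \<inter> ECK C K) = 0"
      "card (SCK C K) = 1" "card (ECK C K) = card (fst ` K) + 1"
    have "SCK C K \<inter> a = {}" using h(1) fS by (simp add: Int_commute)
    moreover have "ECK C K \<inter> b = {}" using h(2) fE by (simp add: Int_commute)
    moreover have "dtree_comp C K" using dtree_iff[OF wf K] h by simp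
    moreover have "\<not> tree_comp C K" unfolding tree_comp_def using h cb by simp
    ultimately show ?thesis by blast
  qed
qed

lemma SCK_sub_SC: "K \<in> ACs C \<Longrightarrow> SCK C K \<subseteq> SC C"
  using SC_decomp[of C] by blast
lemma ECK_sub_EC: "K \<in> ACs C \<Longrightarrow> ECK C K \<subseteq> EC C"
  using EC_decomp[of C] by blast

lemma forward:
  assumes wf: "wf_cfg C" and filt: "filtration_rule F" and bid: "bidegree_rule F"
    and a: "a \<subseteq> SC C" and b: "b \<subseteq> EC C" and Fab: "F C a b"
  shows "sss C a b"
proof -
  let ?P = "PasC ` pas C"
  let ?A = "ACs C"
  have fl: "(\<forall>c\<in>corners C. Circ (sclass C c) \<in> a \<longrightarrow> Circ (eclass C c) \<in> b) \<and>
     (\<forall>w\<in>pas C. PasC w \<in> a \<longrightarrow> PasC w \<in> b)"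
    using filt unfolding filtration_rule_def using wf a b Fab by blast
  then have fc: "\<forall>c\<in>corners C. Circ (sclass C c) \<in> a \<longrightarrow> Circ (eclass C c) \<in> b"
    and fp: "\<forall>w\<in>pas C. PasC w \<in> a \<longrightarrow> PasC w \<in> b" by auto
  have bd: "int (card (EC C)) - 2 * int (card b) + int (card (arcs C))
       = int (card (SC C)) - 2 * int (card a) + 2 * int (card (arcs C))"
    using bid unfolding bidegree_rule_def using wf a b Fab by blast
  have fP: "finite ?P" using wf_basic(2)[OF wf] by simp
  have cSC: "card (SC C) = (\<Sum>K\<in>?A. card (SCK C K)) + card ?P"
  proof -
    have "card (SC C) = (\<Sum>K\<in>?A. card (SC C \<inter> SCK C K)) + card (SC C \<inter> ?P)"
      by (rule card_SC_split[OF wf]) simp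
    moreover have "SC C \<inter> SCK C K = SCK C K" if "K \<in> ?A" for K using SCK_sub_SC[OF that] by blast
    moreover have "SC C \<inter> ?P = ?P" unfolding SC_def by blast
    ultimately show ?thesis by simp
  qed
  have cEC: "card (EC C) = (\<Sum>K\<in>?A. card (ECK C K)) + card ?P"
  proof -
    have "card (EC C) = (\<Sum>K\<in>?A. card (EC C \<inter> ECK C K)) + card (EC C \<inter> ?P)"
      by (rule card_EC_split[OF wf]) simp
    moreover have "EC C \<inter> ECK C K = ECK C K" if "K \<in> ?A" for K using ECK_sub_EC[OF that] by blast
    moreover have "EC C \<inter> ?P = ?P" unfolding EC_def by blast
    ultimately show ?thesis by simp
  qed
  have ca: "card a = (\<Sum>K\<in>?A. card (a \<inter> SCK C K)) + card (a \<inter> ?P)" by (rule card_SC_split[OF wf a])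
  have cb: "card b = (\<Sum>K\<in>?A. card (b \<inter> ECK C K)) + card (b \<inter> ?P)" by (rule card_EC_split[OF wf b])
  have cr: "card (arcs C) = (\<Sum>K\<in>?A. card (fst ` K))" by (rule card_arcs_split[OF wf])
  have sumD: "(\<Sum>K\<in>?A. DD C a b K) = int (\<Sum>K\<in>?A. card (SCK C K)) - int (\<Sum>K\<in>?A. card (ECK C K))
     + int (\<Sum>K\<in>?A. card (fst ` K)) - 2 * int (\<Sum>K\<in>?A. card (a \<inter> SCK C K))
     + 2 * int (\<Sum>K\<in>?A. card (b \<inter> ECK C K))"
    unfolding DD_def of_nat_sum by (simp add: sum.distrib sum_subtractf sum_distrib_left)
  have aPbP: "a \<inter> ?P \<subseteq> b \<inter> ?P" using fp by blast
  have fbP: "finite (b \<inter> ?P)" using fP by simp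
  have DP: "card (a \<inter> ?P) \<le> card (b \<inter> ?P)" by (rule card_mono[OF fbP aPbP])
  have tot: "(\<Sum>K\<in>?A. DD C a b K) + (2 * int (card (b \<inter> ?P)) - 2 * int (card (a \<inter> ?P))) = 0"
    using bd cSC cEC ca cb cr sumD by simp
  have nn: "\<forall>K\<in>?A. 0 \<le> DD C a b K" using DD_nonneg[OF wf _ fc] by blast
  have s0: "(\<Sum>K\<in>?A. DD C a b K) \<ge> 0" using nn by (simp add: sum_nonneg)
  have z1: "(\<Sum>K\<in>?A. DD C a b K) = 0" and z2: "card (a \<inter> ?P) = card (b \<inter> ?P)"
    using tot s0 DP by linarith+
  have zK: "\<forall>K\<in>?A. DD C a b K = 0" using sum_nonneg_eq_0_iff[OF ACs_fin[OF wf]] nn z1 by blast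
  have eqP: "a \<inter> ?P = b \<inter> ?P" using card_subset_eq[OF fbP aPbP] z2 by simp
  have cases: "\<forall>K\<in>?A. (tree_comp C K \<and> \<not> dtree_comp C K \<and> SCK C K \<subseteq> a \<and> ECK C K \<subseteq> b) \<or>
         (dtree_comp C K \<and> \<not> tree_comp C K \<and> SCK C K \<inter> a = {} \<and> ECK C K \<inter> b = {})"
    using DD_zero[OF wf _ fc] zK by blast
  have pasiff: "\<forall>w\<in>pas C. PasC w \<in> a \<longleftrightarrow> PasC w \<in> b" using eqP by blast
  show ?thesis unfolding sss_def using cases pasiff by blast
qed

lemma active_simps: "arcs (active C) = arcs C" "outer (active C) = outer C" "pas (active C) = {}"
  unfolding active_def by simp_all

lemma SC_active: "SC (active C) = (\<lambda>c. Circ (sclass C c)) ` corners C"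
proof -
  have co: "corners (active C) = corners C" unfolding corners_def active_simps ..
  have "sstep (active C) = sstep C" unfolding sstep_def co active_simps ..
  then have "sclass (active C) = sclass C" unfolding sclass_def by simp
  then show ?thesis unfolding SC_def co active_simps by simp
qed

lemma sss_K:
  assumes "sss C a b" "K \<in> ACs C"
  shows "(tree_comp C K \<longrightarrow> SCK C K \<subseteq> a \<and> ECK C K \<subseteq> b) \<and>
         (dtree_comp C K \<longrightarrow> SCK C K \<inter> a = {} \<and> ECK C K \<inter> b = {}) \<and>
         (tree_comp C K \<or> dtree_comp C K)"
proof -
  have h: "(\<forall>K\<in>ACs C. tree_comp C K \<or> dtree_comp C K) \<and>
     (\<forall>K\<in>ACs C. tree_comp C K \<longrightarrow> SCK C K \<subseteq> a \<and> ECK C K \<subseteq> b) \<and>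
     (\<forall>K\<in>ACs C. dtree_comp C K \<longrightarrow> SCK C K \<inter> a = {} \<and> ECK C K \<inter> b = {})"
    using assms(1) unfolding sss_def by (elim conjE) (intro conjI)
  then show ?thesis using assms(2) by (elim conjE) (intro conjI; rule bspec)
qed

lemma sss_pas:
  assumes "sss C a b" shows "\<forall>w\<in>pas C. PasC w \<in> a \<longleftrightarrow> PasC w \<in> b"
  using assms unfolding sss_def by (elim conjE)

lemma minusP: "a \<subseteq> X \<union> P \<Longrightarrow> X \<inter> P = {} \<Longrightarrow> a - P = a \<inter> X"
  by blast

lemma int_UN: "a \<inter> (\<Union>K\<in>A. S K) = (\<Union>K\<in>A. a \<inter> S K)"
  by blast

lemma SCK_P: "(\<Union>K\<in>ACs C. SCK C K) \<inter> PasC ` pas C = {}"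
  unfolding SCK_def by auto

lemma ECK_P: "(\<Union>K\<in>ACs C. ECK C K) \<inter> PasC ` pas C = {}"
  unfolding ECK_def by auto

lemma backward:
  assumes wf: "wf_cfg C" and ext: "extension_rule F"
    and a0: "a0 \<subseteq> SC C" and b0: "b0 \<subseteq> EC C" and F0: "F C a0 b0" and s0: "sss C a0 b0"
    and a: "a \<subseteq> SC C" and b: "b \<subseteq> EC C" and s: "sss C a b"
  shows "F C a b"
proof -
  let ?P = "PasC ` pas C"
  note E = ext[unfolded extension_rule_def, rule_format, OF wf]
  have pa: "a \<inter> SCK C K = a0 \<inter> SCK C K" if K: "K \<in> ACs C" for K
  proof (cases "tree_comp C K")
    case True
    then have "SCK C K \<subseteq> a" "SCK C K \<subseteq> a0" using sss_K[OF s K] sss_K[OF s0 K] by auto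
    then show ?thesis by blast
  next
    case False
    then have "dtree_comp C K" using sss_K[OF s K] by blast
    then have "SCK C K \<inter> a = {}" "SCK C K \<inter> a0 = {}" using sss_K[OF s K] sss_K[OF s0 K] by auto
    then show ?thesis by blast
  qed
  have pb: "b \<inter> ECK C K = b0 \<inter> ECK C K" if K: "K \<in> ACs C" for K
  proof (cases "tree_comp C K")
    case True
    then have "ECK C K \<subseteq> b" "ECK C K \<subseteq> b0" using sss_K[OF s K] sss_K[OF s0 K] by auto
    then show ?thesis by blast
  next
    case False
    then have "dtree_comp C K" using sss_K[OF s K] by blast
    then have "ECK C K \<inter> b = {}" "ECK C K \<inter> b0 = {}" using sss_K[OF s K] sss_K[OF s0 K] by auto
    then show ?thesis by blast
  qed
  have aeq: "a - ?P = a0 - ?P"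
  proof -
    have "a - ?P = a \<inter> (\<Union>K\<in>ACs C. SCK C K)"
      by (rule minusP[OF _ SCK_P]) (use a SC_decomp[of C] in simp)
    moreover have "a0 - ?P = a0 \<inter> (\<Union>K\<in>ACs C. SCK C K)"
      by (rule minusP[OF _ SCK_P]) (use a0 SC_decomp[of C] in simp)
    moreover have "(\<Union>K\<in>ACs C. a \<inter> SCK C K) = (\<Union>K\<in>ACs C. a0 \<inter> SCK C K)"
      using pa by (intro SUP_cong) auto
    ultimately show ?thesis unfolding int_UN by simp
  qed
  have beq: "b - ?P = b0 - ?P"
  proof -
    have "b - ?P = b \<inter> (\<Union>K\<in>ACs C. ECK C K)"
      by (rule minusP[OF _ ECK_P]) (use b EC_decomp[of C] in simp)
    moreover have "b0 - ?P = b0 \<inter> (\<Union>K\<in>ACs C. ECK C K)"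
      by (rule minusP[OF _ ECK_P]) (use b0 EC_decomp[of C] in simp)
    moreover have "(\<Union>K\<in>ACs C. b \<inter> ECK C K) = (\<Union>K\<in>ACs C. b0 \<inter> ECK C K)"
      using pb by (intro SUP_cong) auto
    ultimately show ?thesis unfolding int_UN by simp
  qed
  have "SC C - ?P \<subseteq> (\<lambda>c. Circ (sclass C c)) ` corners C" unfolding SC_def by blast
  then have SCm: "SC C - ?P \<subseteq> SC (active C)" unfolding SC_active .
  have sub: "a - ?P \<subseteq> SC (active C)" "a0 - ?P \<subseteq> SC (active C)"
    using a a0 SCm by blast+
  define v where "v = {w \<in> pas C. PasC w \<in> a}"
  define v0 where "v0 = {w \<in> pas C. PasC w \<in> a0}"
  have vP: "PasC ` v = a \<inter> ?P" unfolding v_def by blast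
  have vP0: "PasC ` v0 = a0 \<inter> ?P" unfolding v0_def by blast
  have av: "a = (a - ?P) \<union> PasC ` v" using vP by blast
  have av0: "a0 = (a0 - ?P) \<union> PasC ` v0" using vP0 by blast
  have vs: "v \<subseteq> pas C" "v0 \<subseteq> pas C" unfolding v_def v0_def by auto
  have bv: "b \<inter> ?P = PasC ` v" using sss_pas[OF s] unfolding vP by blast
  have "F C ((a0 - ?P) \<union> PasC ` v0) b0" using F0 av0 by simp
  then have "F (active C) (a0 - ?P) (b0 - ?P)" using E[OF sub(2) vs(2) b0] by simp
  then have "F (active C) (a - ?P) (b - ?P)" using aeq beq by simp
  then have "F C ((a - ?P) \<union> PasC ` v) b" using E[OF sub(1) vs(1) b] bv by simp
  then show "F C a b" using av by simp
qed

theorem theorem3p5: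
  fixes F :: "cfg \<Rightarrow> cmap" and C :: cfg
  assumes "naturality_rule F" and "disoriented_rule F" and "duality_rule F"
    and "extension_rule F" and "filtration_rule F" and "bidegree_rule F"
    and "wf_cfg C"
    and "\<exists>a b. a \<subseteq> SC C \<and> b \<subseteq> EC C \<and> F C a b"
  shows "\<forall>a b. a \<subseteq> SC C \<longrightarrow> b \<subseteq> EC C \<longrightarrow> F C a b = sss C a b"
proof (intro allI impI)
  fix a b assume a: "a \<subseteq> SC C" and b: "b \<subseteq> EC C"
  obtain a0 b0 where ab0: "a0 \<subseteq> SC C" "b0 \<subseteq> EC C" "F C a0 b0" using assms(8) by blast
  have s0: "sss C a0 b0" by (rule forward[OF assms(7) assms(5) assms(6) ab0])
  show "F C a b = sss C a b"
  proof
    assume "F C a b" then show "sss C a b" by (rule forward[OF assms(7) assms(5) assms(6) a b])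
  next
    assume "sss C a b"
    then show "F C a b" by (rule backward[OF assms(7) assms(4) ab0 s0 a b])
  qed
qed


end
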